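(* Consider the following data. For $i=1,\dots,n_z$ and $j=1,\dots,n_u$ let $A_{c,ij}\in\mathbb{R}^{n_{ij}\times n_{ij}}$ and delays $\tau_{ij}\ge0$ be given, let $T_s>0$, and write $\tau_{ij}/T_s=m_{ij}-v_{ij}$ with $m_{ij}\in\mathbb{Z}_{\ge0}$ and $0\le v_{ij}<1$. Let $A_c=\mathrm{diag}(A_{c,11},A_{c,21},\dots,A_{c,n_zn_u})\in\mathbb{R}^{n_x\times n_x}$ and $V=\mathrm{diag}(v_{11}I_{n_{11}},v_{21}I_{n_{21}},\dots,v_{n_zn_u}I_{n_{n_zn_u}})$. Let $\bar m=\max_{ij}m_{ij}$, $n_{\tilde u}=(\bar m+1)n_u$, and let $B_{1c},B_{2c}\in\mathbb{R}^{n_x\times n_{\tilde u}}$, $C_c\in\mathbb{R}^{n_z\times n_x}$, $D_o\in\mathbb{R}^{n_z\times n_{\tilde u}}$ be the matrices of the delayed system (constructed as in the context). Let $Q_c\in\mathbb{R}^{n_z\times n_z}$ be symmetric positive semidefinite and $\mu>0$. Put $n_{xu}=n_x+n_{\tilde u}$, $I_{xu}$ the $n_{xu}\times n_{xu}$ identity, $I_h=\mathrm{diag}(I_{xu},I_{xu},I_{xu})$, $\bar B_{2c}=V(B_{2c}-B_{1c})$, $$H_{1c}=\begin{bmatrix}A_c&B_{1c}\\0&0\end{bmatrix},\ H_{2c}=\begin{bmatrix}VA_c&\bar B_{2c}\\0&0\end{bmatrix},\ H_{3c}=\begin{bmatrix}VA_c&0\\0&0\end{bmatrix},\ H_c=\mathrm{diag}(H_{1c},H_{2c},H_{3c}),$$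 $H_{cq}=H_c-\tfrac{\mu}{2}I_h$, $H_{cm}=H_c-\mu I_h$, $E_1=[I_{xu},\,I_{xu},\,-I_{xu}]$, $E_2=[I_{xu};I_{xu};I_{xu}]$, $\bar M_c=-\begin{bmatrix}C_c&D_o\end{bmatrix}'Q_c$, $\bar Q_c=-\bar M_c\begin{bmatrix}C_c&D_o\end{bmatrix}$. Let $A(t),A_v(t),B_1(t),B_2(t),H_q(t),H_m(t),Q(t),M(t)$, $t\in[0,T_s]$, solve $$\dot A=A_cA,\ A(0)=I;\quad \dot A_v=VA_cA_v,\ A_v(0)=I;\quad \dot B_1=A(t)B_{1c},\ B_1(0)=0;\quad \dot B_2=A_v(t)\bar B_{2c},\ B_2(0)=0;$$ $$\dot H_q=H_{cq}H_q,\ H_q(0)=I_h;\quad \dot H_m=H_{cm}H_m,\ H_m(0)=I_h;$$ $$\dot Q=\Gamma_q(t)'\bar Q_c\Gamma_q(t),\ Q(0)=0;\quad \dot M=\Gamma_m(t)'\bar M_c,\ M(0)=0,$$ where $\Gamma_q(t)=E_1H_q(t)E_2$ and $\Gamma_m(t)=E_1H_m(t)E_2$. Then $A=A(T_s)$, $B_o=B_1(T_s)+B_2(T_s)$, $Q=Q(T_s)$, $M=M(T_s)$ are the discrete-time matrices of the discounted LQ optimal control problem with time delays, namely $$A=e^{A_cT_s},\qquad B_o=\int_0^{T_s}e^{A_ct}B_{1c}\,dt+V\int_0^{T_s}e^{VA_ct}(B_{2c}-B_{1c})\,dt,$$ $$Q=\int_0^{T_s}e^{-\mu s}\Gamma(s)'\bar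 Q_c\Gamma(s)\,ds,\qquad M=\int_0^{T_s}e^{-\mu s}\Gamma(s)'\bar M_c\,ds,$$ where $\Gamma(s)=\begin{bmatrix}e^{A_cs}&B_o(s)\\0&I\end{bmatrix}$ with $B_o(s)=\int_0^{s}e^{A_cr}B_{1c}\,dr+V\int_0^{s}e^{VA_cr}(B_{2c}-B_{1c})\,dr$.
   Context: Time-delay MIMO system: for $i=1,\dots,n_z$, $j=1,\dots,n_u$, the SISO subsystem from input $j$ to output $i$ is $\dot x_{ij}(t)=A_{c,ij}x_{ij}(t)+B_{c,ij}u_j(t-\tau_{ij})$, $z_{ij}(t)=C_{c,ij}x_{ij}(t)+D_{c,ij}u_j(t-\tau_{ij})$, with $B_{c,ij}\in\mathbb{R}^{n_{ij}\times1}$, $C_{c,ij}\in\mathbb{R}^{1\times n_{ij}}$, $D_{c,ij}\in\mathbb{R}$; the full state is $x=[x_{11};x_{21};\dots;x_{n_zn_u}]\in\mathbb{R}^{n_x}$, input $u=[u_1;\dots;u_{n_u}]$, output $z=[z_1;\dots;z_{n_z}]$ with $z_i=\sum_j z_{ij}$. Inputs are piecewise constant, $u(t)=u_k$ on $[t_k,t_{k+1})$, $t_k=t_0+kT_s$, and the augmented input is $\tilde u_k=[u_{k-\bar m};\dots;u_{k-1};u_k]\in\mathbb{R}^{(\bar m+1)n_u}$. Let $e_j\in\mathbb{R}^{1\times n_u}$ be the $j$-th unit row vector and $E^p_{\bar m+1}\in\mathbb{R}^{n_u\times(\bar m+1)n_u}$ the block row whose $p$-th block is $I_{n_u}$ and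 others zero ($p=1,\dots,\bar m+1$). Then $B_{1c}=[B_{1c,11};B_{1c,21};\dots;B_{1c,n_zn_u}]$ with $B_{1c,ij}=B_{c,ij}e_jE^{m_{ij}}_{\bar m+1}$, $B_{2c}=[B_{2c,11};\dots;B_{2c,n_zn_u}]$ with $B_{2c,ij}=B_{c,ij}e_jE^{m_{ij}+1}_{\bar m+1}$; $C_c=[\bar C_1,\dots,\bar C_{n_u}]$ with $\bar C_j=\mathrm{diag}(C_{c,1j},\dots,C_{c,n_zj})$; $D_o=[\bar D_1;\dots;\bar D_{n_z}]$ with $\bar D_i=\sum_{j}D_{c,ij}e_jE^{m_{ij}}_{\bar m+1}$. In the discrete-time equivalent, the augmented state $\tilde x_k=[x_k;\,u_{k-\bar m};\dots;u_{k-1}]$ evolves with blocks of $A$ and $B_o$, and the stage costs have the form $\tfrac12[\tilde x_k;u_k]'e^{-\mu t_k}Q[\tilde x_k;u_k]+(e^{-\mu t_k}M\bar z_k)'[\tilde x_k;u_k]+\rho_k$ for the discounted cost $\int \tfrac12 e^{-\mu t}(z-\bar z)'Q_c(z-\bar z)\,dt$. A prime denotes transpose. *)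

theory Defs
  imports "HOL-Analysis.Analysis" "Jordan_Normal_Form.Matrix"
begin

fun vstack :: "nat \<Rightarrow> real mat list \<Rightarrow> real mat" where
  "vstack c [] = 0\<^sub>m 0 c"
| "vstack c (A # As) = (let B = vstack c As in
     four_block_mat A (0\<^sub>m (dim_row A) 0) B (0\<^sub>m (dim_row B) 0))"

fun hstack :: "nat \<Rightarrow> real mat list \<Rightarrow> real mat" where
  "hstack r [] = 0\<^sub>m r 0"
| "hstack r (A # As) = (let B = hstack r As in
     four_block_mat A B (0\<^sub>m 0 (dim_col A)) (0\<^sub>m 0 (dim_col B)))"

definition mexp :: "real mat \<Rightarrow> real mat" where
  "mexp A = mat (dim_row A) (dim_col A)
      (\<lambda>(r,c). \<Sum>k. (A ^\<^sub>m k) $$ (r,c) / fact k)"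

definition mat_integral :: "nat \<Rightarrow> nat \<Rightarrow> real \<Rightarrow> real \<Rightarrow> (real \<Rightarrow> real mat) \<Rightarrow> real mat" where
  "mat_integral n m a b F = mat n m (\<lambda>(r,c). integral {a..b} (\<lambda>t. F t $$ (r,c)))"

definition mat_has_deriv_on :: "nat \<Rightarrow> nat \<Rightarrow> (real \<Rightarrow> real mat) \<Rightarrow> (real \<Rightarrow> real mat) \<Rightarrow> real set \<Rightarrow> bool" where
  "mat_has_deriv_on n m F F' S \<longleftrightarrow>
     (\<forall>t\<in>S. F t \<in> carrier_mat n m \<and> F' t \<in> carrier_mat n m \<and>
        (\<forall>r<n. \<forall>c<m. ((\<lambda>s. F s $$ (r,c)) has_real_derivative (F' t $$ (r,c))) (at t within S)))"

definition sym_psd :: "nat \<Rightarrow> real mat \<Rightarrow> bool" where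
  "sym_psd n Q \<longleftrightarrow> Q \<in> carrier_mat n n \<and> transpose_mat Q = Q \<and>
     (\<forall>x \<in> carrier_vec n. 0 \<le> x \<bullet> (Q *\<^sub>v x))"

section \<open>The time-delay system data (indices 0-based: i < nz, j < nu)\<close>

text \<open>Ordering of the subsystems in the state x = [x11; x21; ...; x_{nz nu}]: i runs fastest.\<close>
definition sub_idx :: "nat \<Rightarrow> nat \<Rightarrow> (nat \<times> nat) list" where
  "sub_idx nz nu = concat (map (\<lambda>j. map (\<lambda>i. (i,j)) [0..<nz]) [0..<nu])"

text \<open>tau/Ts = m - v with m a nonnegative integer and 0 \<le> v < 1.\<close>
definition delay_m :: "real \<Rightarrow> real \<Rightarrow> nat" where
  "delay_m Ts tau = nat \<lceil>tau / Ts\<rceil>"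

definition delay_v :: "real \<Rightarrow> real \<Rightarrow> real" where
  "delay_v Ts tau = real (delay_m Ts tau) - tau / Ts"

definition mbar :: "nat \<Rightarrow> nat \<Rightarrow> real \<Rightarrow> (nat \<Rightarrow> nat \<Rightarrow> real) \<Rightarrow> nat" where
  "mbar nz nu Ts tau = Max {delay_m Ts (tau i j) | i j. i < nz \<and> j < nu}"

definition Ac_mat :: "nat \<Rightarrow> nat \<Rightarrow> (nat \<Rightarrow> nat \<Rightarrow> real mat) \<Rightarrow> real mat" where
  "Ac_mat nz nu Acij = diag_block_mat (map (\<lambda>(i,j). Acij i j) (sub_idx nz nu))"

definition V_mat :: "nat \<Rightarrow> nat \<Rightarrow> (nat \<Rightarrow> nat \<Rightarrow> nat) \<Rightarrow> real \<Rightarrow> (nat \<Rightarrow> nat \<Rightarrow> real) \<Rightarrow> real mat" where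
  "V_mat nz nu nij Ts tau = diag_block_mat
     (map (\<lambda>(i,j). delay_v Ts (tau i j) \<cdot>\<^sub>m 1\<^sub>m (nij i j)) (sub_idx nz nu))"

definition unit_row :: "nat \<Rightarrow> nat \<Rightarrow> real mat" where
  "unit_row nu j = mat 1 nu (\<lambda>(_,c). if c = j then 1 else 0)"

text \<open>E^p_{mb+1}: the nu x (mb+1)nu block row whose p-th block (p = 1..mb+1) is I_nu
  and whose other blocks are zero.  (For p = 0 or p > mb+1 there is no p-th block; the
  matrix is then zero.)\<close>
definition Esel :: "nat \<Rightarrow> nat \<Rightarrow> nat \<Rightarrow> real mat" where
  "Esel nu mb p = mat nu ((mb + 1) * nu) (\<lambda>(r,c). if 1 \<le> p \<and> c = (p - 1) * nu + r then 1 else 0)"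

definition B1c_mat :: "nat \<Rightarrow> nat \<Rightarrow> real \<Rightarrow> (nat \<Rightarrow> nat \<Rightarrow> real) \<Rightarrow> (nat \<Rightarrow> nat \<Rightarrow> real mat) \<Rightarrow> real mat" where
  "B1c_mat nz nu Ts tau Bcij = (let mb = mbar nz nu Ts tau in
     vstack ((mb + 1) * nu) (map (\<lambda>(i,j). Bcij i j * unit_row nu j * Esel nu mb (delay_m Ts (tau i j)))
        (sub_idx nz nu)))"

definition B2c_mat :: "nat \<Rightarrow> nat \<Rightarrow> real \<Rightarrow> (nat \<Rightarrow> nat \<Rightarrow> real) \<Rightarrow> (nat \<Rightarrow> nat \<Rightarrow> real mat) \<Rightarrow> real mat" where
  "B2c_mat nz nu Ts tau Bcij = (let mb = mbar nz nu Ts tau in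
     vstack ((mb + 1) * nu) (map (\<lambda>(i,j). Bcij i j * unit_row nu j * Esel nu mb (delay_m Ts (tau i j) + 1))
        (sub_idx nz nu)))"

definition Cc_mat :: "nat \<Rightarrow> nat \<Rightarrow> (nat \<Rightarrow> nat \<Rightarrow> real mat) \<Rightarrow> real mat" where
  "Cc_mat nz nu Ccij = hstack nz (map (\<lambda>j. diag_block_mat (map (\<lambda>i. Ccij i j) [0..<nz])) [0..<nu])"

definition Do_mat :: "nat \<Rightarrow> nat \<Rightarrow> real \<Rightarrow> (nat \<Rightarrow> nat \<Rightarrow> real) \<Rightarrow> (nat \<Rightarrow> nat \<Rightarrow> real) \<Rightarrow> real mat" where
  "Do_mat nz nu Ts tau Dcij = (let mb = mbar nz nu Ts tau in
     vstack ((mb + 1) * nu) (map (\<lambda>i.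
        foldr (+) (map (\<lambda>j. Dcij i j \<cdot>\<^sub>m (unit_row nu j * Esel nu mb (delay_m Ts (tau i j)))) [0..<nu])
          (0\<^sub>m 1 ((mb + 1) * nu))) [0..<nz]))"

end

theory Submission
  imports Defs
begin

lemma mhd_subset: "mat_has_deriv_on n m F F' S \<Longrightarrow> T \<subseteq> S \<Longrightarrow> mat_has_deriv_on n m F F' T"
  unfolding mat_has_deriv_on_def by (meson has_field_derivative_subset subsetD)

lemma mhd_cong: "mat_has_deriv_on n m F F' S \<Longrightarrow> (\<And>t. t \<in> S \<Longrightarrow> F' t = G' t) \<Longrightarrow> mat_has_deriv_on n m F G' S"
  unfolding mat_has_deriv_on_def by auto

lemma mhd_D: "mat_has_deriv_on n m F F' S \<Longrightarrow> t \<in> S \<Longrightarrow> r < n \<Longrightarrow> c < m \<Longrightarrow>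
   ((\<lambda>s. F s $$ (r,c)) has_real_derivative (F' t $$ (r,c))) (at t within S)"
  unfolding mat_has_deriv_on_def by auto

lemma mhd_carrier: "mat_has_deriv_on n m F F' S \<Longrightarrow> t \<in> S \<Longrightarrow> F t \<in> carrier_mat n m \<and> F' t \<in> carrier_mat n m"
  unfolding mat_has_deriv_on_def by auto

lemma mult_index_sum: "K \<in> carrier_mat n n \<Longrightarrow> X \<in> carrier_mat n m \<Longrightarrow> r < n \<Longrightarrow> c < m \<Longrightarrow>
  (K * X) $$ (r,c) = (\<Sum>j=0..<n. K $$ (r,j) * X $$ (j,c))"
  by (auto simp: scalar_prod_def)

lemma ab: "\<bar>x::real\<bar> * \<bar>y\<bar> \<le> (x^2 + y^2) / 2"
proof -
  have "0 \<le> (\<bar>x\<bar> - \<bar>y\<bar>)^2" by simp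
  then show ?thesis unfolding power2_diff power2_abs by (simp add: algebra_simps)
qed
lemma exp_mult_deriv:
  fixes g :: "real \<Rightarrow> real"
  assumes gd: "(g has_real_derivative g' s) (at s within S)"
  shows "((\<lambda>s. exp (- C * s) * g s) has_real_derivative (exp (- C * s) * (g' s - C * g s))) (at s within S)"
proof -
  have e: "((\<lambda>s. exp (- C * s)) has_real_derivative (exp (- C * s) * (- C))) (at s within S)"
    by (auto intro!: derivative_eq_intros)
  show ?thesis using DERIV_mult[OF e gd] by (simp add: algebra_simps)
qed

lemma ode_unique:
  assumes K: "K \<in> carrier_mat n n"
  and X: "mat_has_deriv_on n m X (\<lambda>t. K * X t) {0..T}"
  and Y: "mat_has_deriv_on n m Y (\<lambda>t. K * Y t) {0..T}"
  and XY0: "X 0 = Y 0" and t: "t \<in> {0..T}"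
  shows "X t = Y t"
proof -
  define d where "d r c s = X s $$ (r,c) - Y s $$ (r,c)" for r c s
  have dd: "((\<lambda>s. d r c s) has_real_derivative (\<Sum>j=0..<n. K$$(r,j) * d j c s)) (at s within {0..T})"
    if s: "s \<in> {0..T}" and r: "r < n" and c: "c < m" for s r c
  proof -
    have "((\<lambda>s. d r c s) has_real_derivative ((K * X s) $$ (r,c) - (K * Y s) $$ (r,c))) (at s within {0..T})"
      unfolding d_def by (intro DERIV_diff mhd_D[OF X s r c] mhd_D[OF Y s r c])
    also have "(K * X s) $$ (r,c) - (K * Y s) $$ (r,c) = (\<Sum>j=0..<n. K$$(r,j) * d j c s)"
      using mult_index_sum[OF K conjunct1[OF mhd_carrier[OF X s]] r c]
        mult_index_sum[OF K conjunct1[OF mhd_carrier[OF Y s]] r c]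
      by (simp add: d_def sum_subtractf right_diff_distrib)
    finally show ?thesis .
  qed
  define L where "L = (\<Sum>r=0..<n. \<Sum>j=0..<n. \<bar>K$$(r,j)\<bar>)"
  have L0: "L \<ge> 0" unfolding L_def by (auto intro!: sum_nonneg)
  define g where "g s = (\<Sum>r=0..<n. \<Sum>c=0..<m. (d r c s)^2)" for s
  define g' where "g' s = (\<Sum>r=0..<n. \<Sum>c=0..<m. 2 * d r c s * (\<Sum>j=0..<n. K$$(r,j) * d j c s))" for s
  have gd: "(g has_real_derivative g' s) (at s within {0..T})" if s: "s \<in> {0..T}" for s
    unfolding g_def g'_def
    by (intro DERIV_sum) (auto intro!: derivative_eq_intros dd[OF s] simp: power2_eq_square)
  have g0: "g s \<ge> 0" for s unfolding g_def by (auto intro!: sum_nonneg)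
  have dle: "(d r c s)^2 \<le> g s" if "r < n" "c < m" for r c s
  proof -
    have "(d r c s)^2 \<le> (\<Sum>c=0..<m. (d r c s)^2)"
      by (rule member_le_sum) (use that in auto)
    also have "\<dots> \<le> g s" unfolding g_def
      by (rule member_le_sum[of _ _ "\<lambda>r. \<Sum>c=0..<m. (d r c s)^2"]) (use that in \<open>auto intro!: sum_nonneg\<close>)
    finally show ?thesis .
  qed
  have g'le: "g' s \<le> 2 * (m * L) * g s" for s
  proof -
    have trm: "d r c s * (K$$(r,j) * d j c s) \<le> \<bar>K$$(r,j)\<bar> * g s"
      if "r < n" "c < m" "j < n" for r c j
    proof -
      have "\<bar>d r c s\<bar> * \<bar>d j c s\<bar> \<le> ((d r c s)^2 + (d j c s)^2) / 2"
        by (rule ab)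
      also have "\<dots> \<le> g s" using dle[of r c s] dle[of j c s] that by auto
      finally have a: "\<bar>d r c s\<bar> * \<bar>d j c s\<bar> \<le> g s" .
      have "d r c s * (K$$(r,j) * d j c s) \<le> \<bar>K$$(r,j)\<bar> * (\<bar>d r c s\<bar> * \<bar>d j c s\<bar>)"
        by (metis abs_ge_self abs_mult mult.left_commute)
      also have "\<dots> \<le> \<bar>K$$(r,j)\<bar> * g s" using a by (simp add: mult_left_mono)
      finally show ?thesis .
    qed
    have "g' s = 2 * (\<Sum>r=0..<n. \<Sum>c=0..<m. \<Sum>j=0..<n. d r c s * (K$$(r,j) * d j c s))"
      unfolding g'_def by (simp add: sum_distrib_left mult.assoc)
    also have "\<dots> \<le> 2 * (\<Sum>r=0..<n. \<Sum>c=0..<m. \<Sum>j=0..<n. \<bar>K$$(r,j)\<bar> * g s)"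
      by (intro mult_left_mono sum_mono trm) auto
    also have "\<dots> = 2 * (m * L) * g s"
      unfolding L_def by (simp add: sum_distrib_right sum_distrib_left mult_ac)
    finally show ?thesis .
  qed
  define C where "C = 2 * (m * L)"
  define h where "h s = exp (- C * s) * g s" for s
  have hd: "(h has_real_derivative (exp (- C * s) * (g' s - C * g s))) (at s within {0..T})"
    if s: "s \<in> {0..T}" for s
    unfolding h_def by (rule exp_mult_deriv[where g=g and g'=g', OF gd[OF s]])
  have hcont: "continuous_on {0..T} h"
    using hd by (meson DERIV_continuous continuous_on_eq_continuous_within)
  have d0: "d r c 0 = 0" for r c unfolding d_def XY0 by simp
  have h0: "h 0 = 0" unfolding h_def g_def d0 by simp
  have "h t \<le> h 0"
  proof (rule DERIV_nonpos_imp_decreasing_open[of 0 t h])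
    show "0 \<le> t" using t by auto
    show "continuous_on {0..t} h" using hcont t by (auto elim: continuous_on_subset)
    fix x assume x: "0 < x" "x < t"
    then have xT: "x \<in> {0..T}" and ax: "at x within {0..T} = at x" using t by (auto intro!: at_within_Icc_at)
    show "\<exists>y. (h has_real_derivative y) (at x) \<and> y \<le> 0"
      using hd[OF xT] ax g'le[of x] unfolding C_def
      by (intro exI[of _ "exp (- C * x) * (g' x - C * g x)"]) (auto simp: C_def mult_nonneg_nonpos)
  qed
  moreover have "g 0 = 0" unfolding g_def d0 by simp
  ultimately have "exp (- C * t) * g t \<le> 0" unfolding h_def by simp
  then have "g t \<le> 0" by (simp add: mult_le_0_iff)
  then have "g t = 0" using g0[of t] by simp
  then have "d r c t = 0" if "r < n" "c < m" for r c
    using dle[OF that, of t] by simp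
  then show ?thesis
    using mhd_carrier[OF X t] mhd_carrier[OF Y t] unfolding d_def
    by (intro eq_matI) auto
qed



lemma smult_pow_mat: "(K::real mat) \<in> carrier_mat n n \<Longrightarrow> (t \<cdot>\<^sub>m K) ^\<^sub>m k = t^k \<cdot>\<^sub>m (K ^\<^sub>m k)"
proof (induction k)
  case 0 then show ?case by (intro eq_matI) auto
next
  case (Suc k)
  have "(t \<cdot>\<^sub>m K) ^\<^sub>m Suc k = (t^k \<cdot>\<^sub>m (K ^\<^sub>m k)) * (t \<cdot>\<^sub>m K)" using Suc by simp
  also have "\<dots> = t^k \<cdot>\<^sub>m ((K ^\<^sub>m k) * (t \<cdot>\<^sub>m K))"
    using Suc.prems by (intro mult_smult_assoc_mat[of _ n n _ n]) auto
  also have "(K ^\<^sub>m k) * (t \<cdot>\<^sub>m K) = t \<cdot>\<^sub>m ((K ^\<^sub>m k) * K)"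
    using Suc.prems by (intro mult_smult_distrib[of _ n n _ n]) auto
  finally show ?case by (intro eq_matI) (use Suc.prems in auto)
qed

lemma pow_mat_commute: "(K::real mat) \<in> carrier_mat n n \<Longrightarrow> K ^\<^sub>m k * K = K * K ^\<^sub>m k"
proof (induction k)
  case 0 then show ?case by simp
next
  case (Suc k)
  have "K ^\<^sub>m Suc k * K = (K * K ^\<^sub>m k) * K" using Suc by simp
  also have "\<dots> = K * (K ^\<^sub>m k * K)" using Suc.prems by (intro assoc_mult_mat[of _ n n _ n _ n]) auto
  finally show ?case by simp
qed

lemma pow_mat_bound:
  assumes K: "(K::real mat) \<in> carrier_mat n n" and r: "r < n" and c: "c < n"
  shows "\<bar>(K ^\<^sub>m k) $$ (r,c)\<bar> \<le> ((\<Sum>i=0..<n. \<Sum>j=0..<n. \<bar>K$$(i,j)\<bar>) + 1) ^ k"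
  using r c
proof (induction k arbitrary: r c)
  case 0 then show ?case using K by auto
next
  case (Suc k)
  define L where "L = (\<Sum>i=0..<n. \<Sum>j=0..<n. \<bar>K$$(i,j)\<bar>) + 1"
  have L1: "L \<ge> 1" unfolding L_def by (auto intro!: sum_nonneg)
  have colb: "(\<Sum>j=0..<n. \<bar>K$$(j,c)\<bar>) \<le> L"
  proof -
    have "(\<Sum>j=0..<n. \<bar>K$$(j,c)\<bar>) \<le> (\<Sum>j=0..<n. \<Sum>i=0..<n. \<bar>K$$(j,i)\<bar>)"
      by (intro sum_mono member_le_sum) (use Suc.prems in auto)
    then show ?thesis unfolding L_def by simp
  qed
  have "(K ^\<^sub>m Suc k) $$ (r,c) = (\<Sum>j=0..<n. (K ^\<^sub>m k) $$ (r,j) * K $$ (j,c))"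
    using K Suc.prems by (simp add: scalar_prod_def)
  then have "\<bar>(K ^\<^sub>m Suc k) $$ (r,c)\<bar> \<le> (\<Sum>j=0..<n. \<bar>(K ^\<^sub>m k) $$ (r,j)\<bar> * \<bar>K $$ (j,c)\<bar>)"
    by (simp add: sum_abs[THEN order_trans] abs_mult)
  also have "\<dots> \<le> (\<Sum>j=0..<n. L^k * \<bar>K $$ (j,c)\<bar>)"
    using Suc.IH Suc.prems unfolding L_def by (intro sum_mono mult_right_mono) auto
  also have "\<dots> = L^k * (\<Sum>j=0..<n. \<bar>K $$ (j,c)\<bar>)" by (simp add: sum_distrib_left)
  also have "\<dots> \<le> L^k * L" using colb L1 by (intro mult_left_mono) auto
  finally show ?case unfolding L_def by (simp add: mult.commute)
qed

definition mcoef :: "real mat \<Rightarrow> nat \<Rightarrow> nat \<Rightarrow> nat \<Rightarrow> real" where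
  "mcoef K r c k = (K ^\<^sub>m k) $$ (r,c) / fact k"

lemma mexp_entry:
  assumes K: "K \<in> carrier_mat n n" and r: "r < n" and c: "c < n"
  shows "mexp (t \<cdot>\<^sub>m K) $$ (r,c) = (\<Sum>k. mcoef K r c k * t^k)"
  unfolding mexp_def mcoef_def using K r c
  by (simp add: smult_pow_mat[OF K] mult.commute)

lemma mexp_carrier: "K \<in> carrier_mat n n \<Longrightarrow> mexp (t \<cdot>\<^sub>m K) \<in> carrier_mat n n"
  unfolding mexp_def by auto

lemma mcoef_summable:
  assumes K: "K \<in> carrier_mat n n" and r: "r < n" and c: "c < n"
  shows "summable (\<lambda>k. mcoef K r c k * y^k)"
proof -
  define L where "L = (\<Sum>i=0..<n. \<Sum>j=0..<n. \<bar>K$$(i,j)\<bar>) + 1"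
  have "summable (\<lambda>k. inverse (fact k) * (L * \<bar>y\<bar>)^k)" by (rule summable_exp)
  then show ?thesis
  proof (rule summable_comparison_test[rotated], intro exI[of _ 0] allI impI)
    fix k :: nat
    have "norm (mcoef K r c k * y^k) = \<bar>(K ^\<^sub>m k) $$ (r,c)\<bar> * \<bar>y\<bar>^k / fact k"
      unfolding mcoef_def by (simp add: abs_mult power_abs)
    also have "\<dots> \<le> L^k * \<bar>y\<bar>^k / fact k"
      using pow_mat_bound[OF K r c, of k] unfolding L_def
      by (intro divide_right_mono mult_right_mono) auto
    also have "\<dots> = inverse (fact k) * (L * \<bar>y\<bar>)^k" by (simp add: power_mult_distrib field_simps)
    finally show "norm (mcoef K r c k * y^k) \<le> inverse (fact k) * (L * \<bar>y\<bar>)^k" .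
  qed
qed

lemma mexp_deriv_entry:
  assumes K: "K \<in> carrier_mat n n" and r: "r < n" and c: "c < n"
  shows "((\<lambda>s. mexp (s \<cdot>\<^sub>m K) $$ (r,c)) has_real_derivative (K * mexp (t \<cdot>\<^sub>m K)) $$ (r,c)) (at t)"
proof -
  have eq: "(\<lambda>s. mexp (s \<cdot>\<^sub>m K) $$ (r,c)) = (\<lambda>s. \<Sum>k. mcoef K r c k * s^k)"
    using mexp_entry[OF K r c] by auto
  have d: "((\<lambda>s. \<Sum>k. mcoef K r c k * s^k) has_real_derivative (\<Sum>k. diffs (mcoef K r c) k * t^k)) (at t)"
    by (rule termdiffs_strong_converges_everywhere) (rule mcoef_summable[OF K r c])
  have "diffs (mcoef K r c) k * t^k = (\<Sum>j=0..<n. K $$ (r,j) * (mcoef K j c k * t^k))" for k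
  proof -
    have "diffs (mcoef K r c) k = (K ^\<^sub>m Suc k) $$ (r,c) / fact k"
      unfolding diffs_def mcoef_def by (simp add: field_simps del: of_nat_Suc)
    also have "K ^\<^sub>m Suc k = K * K ^\<^sub>m k" using pow_mat_commute[OF K] by simp
    also have "(K * K ^\<^sub>m k) $$ (r,c) = (\<Sum>j=0..<n. K $$ (r,j) * (K ^\<^sub>m k) $$ (j,c))"
      using K r c by (simp add: scalar_prod_def)
    finally show ?thesis unfolding mcoef_def by (simp add: sum_distrib_left sum_distrib_right sum_divide_distrib mult_ac)
  qed
  then have "(\<Sum>k. diffs (mcoef K r c) k * t^k) = (\<Sum>k. \<Sum>j=0..<n. K $$ (r,j) * (mcoef K j c k * t^k))"
    by simp
  also have "\<dots> = (\<Sum>j=0..<n. \<Sum>k. K $$ (r,j) * (mcoef K j c k * t^k))"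
    by (rule suminf_sum) (use mcoef_summable[OF K _ c] in \<open>auto intro: summable_mult\<close>)
  also have "\<dots> = (\<Sum>j=0..<n. K $$ (r,j) * mexp (t \<cdot>\<^sub>m K) $$ (j,c))"
    by (intro sum.cong refl) (use mcoef_summable[OF K _ c] mexp_entry[OF K _ c] in \<open>auto simp: suminf_mult\<close>)
  also have "\<dots> = (K * mexp (t \<cdot>\<^sub>m K)) $$ (r,c)"
    using mult_index_sum[OF K mexp_carrier[OF K] r c] by simp
  finally show ?thesis using d eq by simp
qed

lemma mexp_mhd: "K \<in> carrier_mat n n \<Longrightarrow> mat_has_deriv_on n n (\<lambda>t. mexp (t \<cdot>\<^sub>m K)) (\<lambda>t. K * mexp (t \<cdot>\<^sub>m K)) S"
  unfolding mat_has_deriv_on_def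
  using mexp_carrier mexp_deriv_entry by (auto intro: has_field_derivative_at_within)

lemma mexp_zero: assumes K: "K \<in> carrier_mat n n" shows "mexp (0 \<cdot>\<^sub>m K) = 1\<^sub>m n"
proof (rule eq_matI)
  fix r c assume r: "r < dim_row (1\<^sub>m n)" and c: "c < dim_col (1\<^sub>m n)"
  show "mexp (0 \<cdot>\<^sub>m K) $$ (r,c) = 1\<^sub>m n $$ (r,c)"
    using mexp_entry[OF K, of r c 0] r c K powser_zero[of "mcoef K r c"] by (simp add: mcoef_def)
qed (use mexp_carrier[OF K, of 0] in auto)

lemma ode_mexp:
  assumes K: "K \<in> carrier_mat n n"
  and X: "mat_has_deriv_on n n X (\<lambda>t. K * X t) {0..T}" and X0: "X 0 = 1\<^sub>m n"
  and t: "t \<in> {0..T}"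
  shows "X t = mexp (t \<cdot>\<^sub>m K)"
  by (rule ode_unique[OF K X mexp_mhd[OF K] _ t]) (simp add: X0 mexp_zero[OF K])


lemma deriv_transform:
  assumes "(f has_real_derivative D) (at t within S)" "t \<in> S" "\<And>s. s \<in> S \<Longrightarrow> f s = g s" "D = D'"
  shows "(g has_real_derivative D') (at t within S)"
  using has_field_derivative_transform_within[where d=1, OF assms(1) _ assms(2)] assms(3,4) by auto

lemma mhd_I:
  assumes "\<And>t. t \<in> S \<Longrightarrow> F t \<in> carrier_mat n m \<and> F' t \<in> carrier_mat n m"
   and "\<And>t r c. t \<in> S \<Longrightarrow> r < n \<Longrightarrow> c < m \<Longrightarrow>
   ((\<lambda>s. F s $$ (r,c)) has_real_derivative (F' t $$ (r,c))) (at t within S)"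
  shows "mat_has_deriv_on n m F F' S"
  using assms unfolding mat_has_deriv_on_def by auto

lemma mhd_const: "C \<in> carrier_mat n m \<Longrightarrow> mat_has_deriv_on n m (\<lambda>t. C) (\<lambda>t. 0\<^sub>m n m) S"
  by (intro mhd_I) auto

lemma mhd_add: "mat_has_deriv_on n m F F' S \<Longrightarrow> mat_has_deriv_on n m G G' S \<Longrightarrow>
  mat_has_deriv_on n m (\<lambda>t. F t + G t) (\<lambda>t. F' t + G' t) S"
proof (intro mhd_I)
  fix t r c assume F: "mat_has_deriv_on n m F F' S" and G: "mat_has_deriv_on n m G G' S"
    and t: "t \<in> S" and r: "r < n" and c: "c < m"
  have d: "((\<lambda>s. F s $$ (r,c) + G s $$ (r,c)) has_real_derivative (F' t $$ (r,c) + G' t $$ (r,c))) (at t within S)"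
    by (intro DERIV_add mhd_D[OF F t r c] mhd_D[OF G t r c])
  have e: "(F s + G s) $$ (r,c) = F s $$ (r,c) + G s $$ (r,c)" if "s \<in> S" for s
    using mhd_carrier[OF F that] mhd_carrier[OF G that] r c by auto
  show "((\<lambda>s. (F s + G s) $$ (r,c)) has_real_derivative (F' t + G' t) $$ (r,c)) (at t within S)"
    by (rule deriv_transform[OF d t]) (use e t r c mhd_carrier[OF F t] mhd_carrier[OF G t] in auto)
qed (auto dest: mhd_carrier)

lemma mhd_minus: "mat_has_deriv_on n m F F' S \<Longrightarrow> mat_has_deriv_on n m G G' S \<Longrightarrow>
  mat_has_deriv_on n m (\<lambda>t. F t - G t) (\<lambda>t. F' t - G' t) S"
proof (intro mhd_I)
  fix t r c assume F: "mat_has_deriv_on n m F F' S" and G: "mat_has_deriv_on n m G G' S"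
    and t: "t \<in> S" and r: "r < n" and c: "c < m"
  have d: "((\<lambda>s. F s $$ (r,c) - G s $$ (r,c)) has_real_derivative (F' t $$ (r,c) - G' t $$ (r,c))) (at t within S)"
    by (intro DERIV_diff mhd_D[OF F t r c] mhd_D[OF G t r c])
  have e: "(F s - G s) $$ (r,c) = F s $$ (r,c) - G s $$ (r,c)" if "s \<in> S" for s
    using mhd_carrier[OF F that] mhd_carrier[OF G that] r c by auto
  show "((\<lambda>s. (F s - G s) $$ (r,c)) has_real_derivative (F' t - G' t) $$ (r,c)) (at t within S)"
    by (rule deriv_transform[OF d t]) (use e t r c mhd_carrier[OF F t] mhd_carrier[OF G t] in auto)
qed (auto dest: mhd_carrier intro!: minus_carrier_mat)

lemma mhd_mult_left:
  assumes C: "C \<in> carrier_mat k n" and F: "mat_has_deriv_on n m F F' S"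
  shows "mat_has_deriv_on k m (\<lambda>t. C * F t) (\<lambda>t. C * F' t) S"
proof (intro mhd_I)
  fix t r c assume t: "t \<in> S" and r: "r < k" and c: "c < m"
  have d: "((\<lambda>s. \<Sum>j=0..<n. C $$ (r,j) * F s $$ (j,c)) has_real_derivative (\<Sum>j=0..<n. C $$ (r,j) * F' t $$ (j,c))) (at t within S)"
    by (intro DERIV_sum DERIV_cmult mhd_D[OF F t]) (use c in auto)
  have e: "(C * F s) $$ (r,c) = (\<Sum>j=0..<n. C $$ (r,j) * F s $$ (j,c))" if "s \<in> S" for s
    using mhd_carrier[OF F that] r c C by (auto simp: scalar_prod_def)
  have e2: "(C * F' t) $$ (r,c) = (\<Sum>j=0..<n. C $$ (r,j) * F' t $$ (j,c))"
    using mhd_carrier[OF F t] r c C by (auto simp: scalar_prod_def)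
  show "((\<lambda>s. (C * F s) $$ (r,c)) has_real_derivative (C * F' t) $$ (r,c)) (at t within S)"
    by (rule deriv_transform[OF d t]) (use e e2 t r c in auto)
qed (use C mhd_carrier[OF F] in \<open>auto intro: mult_carrier_mat\<close>)

lemma mhd_mult_right:
  assumes C: "C \<in> carrier_mat m k" and F: "mat_has_deriv_on n m F F' S"
  shows "mat_has_deriv_on n k (\<lambda>t. F t * C) (\<lambda>t. F' t * C) S"
proof (intro mhd_I)
  fix t r c assume t: "t \<in> S" and r: "r < n" and c: "c < k"
  have d: "((\<lambda>s. \<Sum>j=0..<m. F s $$ (r,j) * C $$ (j,c)) has_real_derivative (\<Sum>j=0..<m. F' t $$ (r,j) * C $$ (j,c))) (at t within S)"
    by (intro DERIV_sum DERIV_cmult_right mhd_D[OF F t]) (use r in auto)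
  have e: "(F s * C) $$ (r,c) = (\<Sum>j=0..<m. F s $$ (r,j) * C $$ (j,c))" if "s \<in> S" for s
    using mhd_carrier[OF F that] r c C by (auto simp: scalar_prod_def)
  have e2: "(F' t * C) $$ (r,c) = (\<Sum>j=0..<m. F' t $$ (r,j) * C $$ (j,c))"
    using mhd_carrier[OF F t] r c C by (auto simp: scalar_prod_def)
  show "((\<lambda>s. (F s * C) $$ (r,c)) has_real_derivative (F' t * C) $$ (r,c)) (at t within S)"
    by (rule deriv_transform[OF d t]) (use e e2 t r c in auto)
qed (use C mhd_carrier[OF F] in \<open>auto intro: mult_carrier_mat\<close>)

lemma mhd_smult_fun:
  assumes f: "\<And>t. t \<in> S \<Longrightarrow> (f has_real_derivative f' t) (at t within S)"
    and F: "mat_has_deriv_on n m F F' S"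
  shows "mat_has_deriv_on n m (\<lambda>t. f t \<cdot>\<^sub>m F t) (\<lambda>t. f' t \<cdot>\<^sub>m F t + f t \<cdot>\<^sub>m F' t) S"
proof (intro mhd_I)
  fix t r c assume t: "t \<in> S" and r: "r < n" and c: "c < m"
  have d: "((\<lambda>s. f s * F s $$ (r,c)) has_real_derivative (f' t * F t $$ (r,c) + f t * F' t $$ (r,c))) (at t within S)"
    by (rule DERIV_cong[OF DERIV_mult[OF f[OF t] mhd_D[OF F t r c]]]) (simp add: algebra_simps)
  have e: "(f s \<cdot>\<^sub>m F s) $$ (r,c) = f s * F s $$ (r,c)" if "s \<in> S" for s
    using mhd_carrier[OF F that] r c by auto
  show "((\<lambda>s. (f s \<cdot>\<^sub>m F s) $$ (r,c)) has_real_derivative (f' t \<cdot>\<^sub>m F t + f t \<cdot>\<^sub>m F' t) $$ (r,c)) (at t within S)"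
    by (rule deriv_transform[OF d t]) (use e t r c mhd_carrier[OF F t] in auto)
qed (use mhd_carrier[OF F] in auto)

lemma mhd_four_block:
  assumes A: "mat_has_deriv_on n1 m1 A A' S" and B: "mat_has_deriv_on n1 m2 B B' S"
    and C: "mat_has_deriv_on n2 m1 C C' S" and D: "mat_has_deriv_on n2 m2 D D' S"
  shows "mat_has_deriv_on (n1+n2) (m1+m2) (\<lambda>t. four_block_mat (A t) (B t) (C t) (D t))
           (\<lambda>t. four_block_mat (A' t) (B' t) (C' t) (D' t)) S"
proof (intro mhd_I)
  fix t r c assume t: "t \<in> S" and r: "r < n1 + n2" and c: "c < m1 + m2"
  define e where "e X Y Z W = (if r < n1 then if c < m1 then X $$ (r,c) else Y $$ (r,c - m1)
      else if c < m1 then Z $$ (r - n1, c) else W $$ (r - n1, c - m1))" for X Y Z W :: "real mat"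
  have eq: "four_block_mat (A s) (B s) (C s) (D s) $$ (r,c) = e (A s) (B s) (C s) (D s)" if "s \<in> S" for s
    using mhd_carrier[OF A that] mhd_carrier[OF D that] r c unfolding e_def by auto
  have eq': "four_block_mat (A' t) (B' t) (C' t) (D' t) $$ (r,c) = e (A' t) (B' t) (C' t) (D' t)"
    using mhd_carrier[OF A t] mhd_carrier[OF D t] r c unfolding e_def by auto
  have "((\<lambda>s. e (A s) (B s) (C s) (D s)) has_real_derivative e (A' t) (B' t) (C' t) (D' t)) (at t within S)"
  proof (cases "r < n1"; cases "c < m1")
    assume "r < n1" "c < m1" then show ?thesis unfolding e_def by (simp add: mhd_D[OF A t])
  next
    assume "r < n1" "\<not> c < m1" then show ?thesis unfolding e_def using c by (simp add: mhd_D[OF B t])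
  next
    assume "\<not> r < n1" "c < m1" then show ?thesis unfolding e_def using r by (simp add: mhd_D[OF C t])
  next
    assume "\<not> r < n1" "\<not> c < m1" then show ?thesis unfolding e_def using r c by (simp add: mhd_D[OF D t])
  qed
  then show "((\<lambda>s. four_block_mat (A s) (B s) (C s) (D s) $$ (r,c)) has_real_derivative
      four_block_mat (A' t) (B' t) (C' t) (D' t) $$ (r,c)) (at t within S)"
    by (rule deriv_transform[OF _ t]) (use eq eq' in auto)
qed (use mhd_carrier[OF A] mhd_carrier[OF D] in auto)

lemma mhd_ftc:
  assumes F: "mat_has_deriv_on n m F F' {0..T}" and T: "0 \<le> T"
  shows "F T = F 0 + mat_integral n m 0 T F'"
proof (rule eq_matI)
  fix r c assume r: "r < dim_row (F 0 + mat_integral n m 0 T F')" and c: "c < dim_col (F 0 + mat_integral n m 0 T F')"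
  then have r: "r < n" and c: "c < m" unfolding mat_integral_def by auto
  have "((\<lambda>t. F' t $$ (r,c)) has_integral (F T $$ (r,c) - F 0 $$ (r,c))) {0..T}"
    by (rule fundamental_theorem_of_calculus[OF T])
      (use mhd_D[OF F _ r c] in \<open>auto simp: has_real_derivative_iff_has_vector_derivative\<close>)
  then have "integral {0..T} (\<lambda>t. F' t $$ (r,c)) = F T $$ (r,c) - F 0 $$ (r,c)"
    by (rule integral_unique)
  then show "F T $$ (r,c) = (F 0 + mat_integral n m 0 T F') $$ (r,c)"
    using r c mhd_carrier[OF F, of 0] T unfolding mat_integral_def by auto
qed (use mhd_carrier[OF F, of 0] mhd_carrier[OF F, of T] T in \<open>auto simp: mat_integral_def\<close>)

lemma mhd_continuous:
  assumes F: "mat_has_deriv_on n m F F' S" and r: "r < n" and c: "c < m"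
  shows "continuous_on S (\<lambda>t. F t $$ (r,c))"
  using mhd_D[OF F _ r c] by (meson DERIV_continuous continuous_on_eq_continuous_within)



lemma vstack_carrier: "(\<And>x. x \<in> set xs \<Longrightarrow> f x \<in> carrier_mat (d x) c) \<Longrightarrow>
  vstack c (map f xs) \<in> carrier_mat (sum_list (map d xs)) c"
proof (induction xs)
  case Nil then show ?case by simp
next
  case (Cons a xs)
  have A: "f a \<in> carrier_mat (d a) c" using Cons.prems by auto
  have B: "vstack c (map f xs) \<in> carrier_mat (sum_list (map d xs)) c" using Cons by auto
  have "vstack c (map f (a#xs)) = four_block_mat (f a) (0\<^sub>m (d a) 0) (vstack c (map f xs)) (0\<^sub>m (sum_list (map d xs)) 0)"
    using A B by (simp add: Let_def)
  then show ?case using four_block_carrier_mat[OF A zero_carrier_mat[of "sum_list (map d xs)" 0]] by simp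
qed

lemma hstack_carrier: "(\<And>x. x \<in> set xs \<Longrightarrow> f x \<in> carrier_mat r (d x)) \<Longrightarrow>
  hstack r (map f xs) \<in> carrier_mat r (sum_list (map d xs))"
proof (induction xs)
  case Nil then show ?case by simp
next
  case (Cons a xs)
  have A: "f a \<in> carrier_mat r (d a)" using Cons.prems by auto
  have B: "hstack r (map f xs) \<in> carrier_mat r (sum_list (map d xs))" using Cons by auto
  have "hstack r (map f (a#xs)) = four_block_mat (f a) (hstack r (map f xs)) (0\<^sub>m 0 (d a)) (0\<^sub>m 0 (sum_list (map d xs)))"
    using A B by (simp add: Let_def)
  then show ?case using four_block_carrier_mat[OF A zero_carrier_mat[of 0 "sum_list (map d xs)"]] by simp
qed

lemma diag_block_carrier: "(\<And>x. x \<in> set xs \<Longrightarrow> f x \<in> carrier_mat (d x) (e x)) \<Longrightarrow>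
  diag_block_mat (map f xs) \<in> carrier_mat (sum_list (map d xs)) (sum_list (map e xs))"
proof -
  assume a: "\<And>x. x \<in> set xs \<Longrightarrow> f x \<in> carrier_mat (d x) (e x)"
  have r: "map dim_row (map f xs) = map d xs" and c: "map dim_col (map f xs) = map e xs"
    using a by auto
  show ?thesis by (rule carrier_matI) (simp_all only: dim_diag_block_mat r c)
qed

lemma diag_block_mult:
  fixes f g :: "'b \<Rightarrow> real mat"
  assumes "\<And>x. x \<in> set xs \<Longrightarrow> f x \<in> carrier_mat (d x) (d x) \<and> g x \<in> carrier_mat (d x) (d x)"
  shows "diag_block_mat (map f xs) * diag_block_mat (map g xs) = diag_block_mat (map (\<lambda>x. f x * g x) xs)"
  using assms
proof (induction xs)
  case Nil then show ?case by auto
next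
  case (Cons x xs)
  let ?F = "diag_block_mat (map f xs)" and ?G = "diag_block_mat (map g xs)"
  let ?n = "sum_list (map d xs)"
  have F: "?F \<in> carrier_mat ?n ?n" and G: "?G \<in> carrier_mat ?n ?n"
    using Cons.prems by (auto intro!: diag_block_carrier)
  have fx: "f x \<in> carrier_mat (d x) (d x)" and gx: "g x \<in> carrier_mat (d x) (d x)" using Cons.prems by auto
  have FG: "diag_block_mat (map (\<lambda>x. f x * g x) xs) \<in> carrier_mat ?n ?n"
    using Cons.prems by (intro diag_block_carrier) (meson list.set_intros(2) mult_carrier_mat)
  have IH: "?F * ?G = diag_block_mat (map (\<lambda>x. f x * g x) xs)" using Cons by auto
  have dims: "dim_row (f x) = d x" "dim_col (f x) = d x" "dim_row (g x) = d x" "dim_col (g x) = d x"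
     "dim_row ?F = ?n" "dim_col ?F = ?n" "dim_row ?G = ?n" "dim_col ?G = ?n"
     "dim_row (f x * g x) = d x" "dim_col (f x * g x) = d x"
     "dim_row (diag_block_mat (map (\<lambda>x. f x * g x) xs)) = ?n"
     "dim_col (diag_block_mat (map (\<lambda>x. f x * g x) xs)) = ?n"
    using fx gx F G FG by auto
  have "diag_block_mat (map f (x#xs)) * diag_block_mat (map g (x#xs)) =
    four_block_mat (f x) (0\<^sub>m (d x) ?n) (0\<^sub>m ?n (d x)) ?F * four_block_mat (g x) (0\<^sub>m (d x) ?n) (0\<^sub>m ?n (d x)) ?G"
    by (simp only: list.map diag_block_mat.simps Let_def dims)
  also have "\<dots> = four_block_mat (f x * g x + 0\<^sub>m (d x) ?n * 0\<^sub>m ?n (d x)) (f x * 0\<^sub>m (d x) ?n + 0\<^sub>m (d x) ?n * ?G)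
     (0\<^sub>m ?n (d x) * g x + ?F * 0\<^sub>m ?n (d x)) (0\<^sub>m ?n (d x) * 0\<^sub>m (d x) ?n + ?F * ?G)"
    by (rule mult_four_block_mat[OF fx _ _ F gx _ _ G]) auto
  also have "\<dots> = four_block_mat (f x * g x) (0\<^sub>m (d x) ?n) (0\<^sub>m ?n (d x)) (?F * ?G)"
    using fx gx F G by (intro cong_four_block_mat) auto
  also have "\<dots> = diag_block_mat (map (\<lambda>x. f x * g x) (x#xs))"
    unfolding IH by (simp only: list.map diag_block_mat.simps Let_def dims)
  finally show ?case .
qed

lemma set_sub_idx: "set (sub_idx nz nu) = {(i,j). i < nz \<and> j < nu}"
  unfolding sub_idx_def by auto

lemma foldr_add_dims: "dim_row (foldr (+) xs (B :: real mat)) = dim_row B \<and> dim_col (foldr (+) xs B) = dim_col B"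
  by (induction xs) auto

lemma foldr_add_carrier: "foldr (+) xs (B :: real mat) \<in> carrier_mat (dim_row B) (dim_col B)"
  using foldr_add_dims[of xs B] by (intro carrier_matI) auto

lemma aux_ident:
  assumes K: "K \<in> carrier_mat n n" and Bc: "Bc \<in> carrier_mat n p"
    and A: "mat_has_deriv_on n n A (\<lambda>t. K * A t) {0..T}" and A0: "A 0 = 1\<^sub>m n"
    and B: "mat_has_deriv_on n p B (\<lambda>t. A t * Bc) {0..T}" and B0: "B 0 = 0\<^sub>m n p"
    and t: "t \<in> {0..T}"
  shows "A t * Bc = K * B t + Bc"
proof -
  have Z: "mat_has_deriv_on n p (\<lambda>t. A t * Bc - K * B t) (\<lambda>t. 0\<^sub>m n n * (A t * Bc - K * B t)) {0..T}"
  proof (rule mhd_cong[OF mhd_minus[OF mhd_mult_right[OF Bc A] mhd_mult_left[OF K B]]])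
    fix s assume s: "s \<in> {0..T}"
    have As: "A s \<in> carrier_mat n n" and Bs: "B s \<in> carrier_mat n p"
      using mhd_carrier[OF A s] mhd_carrier[OF B s] by auto
    have "K * A s * Bc = K * (A s * Bc)" using K As Bc by (rule assoc_mult_mat)
    then show "K * A s * Bc - K * (A s * Bc) = 0\<^sub>m n n * (A s * Bc - K * B s)"
      using K As Bs Bc by (intro eq_matI) auto
  qed
  have C: "mat_has_deriv_on n p (\<lambda>t. Bc) (\<lambda>t. 0\<^sub>m n n * Bc) {0..T}"
    by (rule mhd_cong[OF mhd_const[OF Bc]]) (use Bc in auto)
  have eq: "A t * Bc - K * B t = Bc"
    by (rule ode_unique[OF zero_carrier_mat Z C _ t]) (use Bc K in \<open>auto simp: A0 B0\<close>)
  have At: "A t \<in> carrier_mat n n" and Bt: "B t \<in> carrier_mat n p"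
    using mhd_carrier[OF A t] mhd_carrier[OF B t] by auto
  show ?thesis
  proof (rule eq_matI)
    fix i j assume i: "i < dim_row (K * B t + Bc)" and j: "j < dim_col (K * B t + Bc)"
    then have i: "i < n" and j: "j < p" using K Bc by auto
    have "(A t * Bc - K * B t) $$ (i,j) = Bc $$ (i,j)" using eq by simp
    then show "(A t * Bc) $$ (i,j) = (K * B t + Bc) $$ (i,j)" using i j At Bt K Bc by simp
  qed (use At Bt K Bc in auto)
qed

lemma sum_E1:
  fixes f :: "nat \<Rightarrow> real"
  assumes r: "r < N"
  shows "(\<Sum>k=0..<3*N. (if k = r \<or> k = r + N then 1 else if k = r + 2*N then -1 else 0) * f k)
     = f r + f (r + N) - f (r + 2*N)"
proof -
  have "(\<Sum>k=0..<3*N. (if k = r \<or> k = r + N then 1 else if k = r + 2*N then -1 else 0) * f k)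
    = (\<Sum>k=0..<3*N. (if k = r then f k else 0) + (if k = r + N then f k else 0) - (if k = r + 2*N then f k else 0))"
    using r by (intro sum.cong refl) auto
  also have "\<dots> = f r + f (r + N) - f (r + 2*N)"
    using r by (simp add: sum.distrib sum_subtractf)
  finally show ?thesis .
qed

lemma sum_E2:
  fixes f :: "nat \<Rightarrow> real"
  assumes r: "r < N"
  shows "(\<Sum>k=0..<3*N. f k * (if k = r \<or> k = r + N \<or> k = r + 2*N then 1 else 0))
     = f r + f (r + N) + f (r + 2*N)"
proof -
  have "(\<Sum>k=0..<3*N. f k * (if k = r \<or> k = r + N \<or> k = r + 2*N then 1 else 0))
    = (\<Sum>k=0..<3*N. (if k = r then f k else 0) + (if k = r + N then f k else 0) + (if k = r + 2*N then f k else 0))"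
    using r by (intro sum.cong refl) auto
  also have "\<dots> = f r + f (r + N) + f (r + 2*N)"
    using r by (simp add: sum.distrib)
  finally show ?thesis .
qed

lemma E1_eq: "hstack N [1\<^sub>m N, 1\<^sub>m N, - 1\<^sub>m N] =
   mat N (3*N) (\<lambda>(r,k). if k = r \<or> k = r + N then 1 else if k = r + 2*N then -1 else (0::real))"
  by (rule eq_matI) (auto simp: Let_def)

lemma E2_eq: "vstack N [1\<^sub>m N, 1\<^sub>m N, 1\<^sub>m N] =
   mat (3*N) N (\<lambda>(k,c). if k = c \<or> k = c + N \<or> k = c + 2*N then 1 else (0::real))"
  by (rule eq_matI) (auto simp: Let_def)

lemma diag3: "X \<in> carrier_mat N N \<Longrightarrow> Y \<in> carrier_mat N N \<Longrightarrow> Z \<in> carrier_mat N N \<Longrightarrow>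
  diag_block_mat [X, Y, Z] = four_block_mat X (0\<^sub>m N (N+N)) (0\<^sub>m (N+N) N) (four_block_mat Y (0\<^sub>m N N) (0\<^sub>m N N) Z)"
proof -
  assume Z: "Z \<in> carrier_mat N N"
  have "four_block_mat Z (0\<^sub>m N 0) (0\<^sub>m 0 N) (0\<^sub>m 0 0) = Z" using Z by (intro eq_matI) auto
  then show "X \<in> carrier_mat N N \<Longrightarrow> Y \<in> carrier_mat N N \<Longrightarrow> ?thesis" using Z by (simp add: Let_def)
qed

lemma mult_index_sum2: "(A::real mat) \<in> carrier_mat n m \<Longrightarrow> B \<in> carrier_mat m q \<Longrightarrow> i < n \<Longrightarrow> j < q \<Longrightarrow>
  (A * B) $$ (i,j) = (\<Sum>k=0..<m. A $$ (i,k) * B $$ (k,j))"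
  by (auto simp: scalar_prod_def)

lemma E1E2_carrier:
  "hstack N [1\<^sub>m N, 1\<^sub>m N, - 1\<^sub>m N] \<in> carrier_mat N (3*N)"
  "vstack N [1\<^sub>m N, 1\<^sub>m N, 1\<^sub>m N] \<in> carrier_mat (3*N) N"
  unfolding E1_eq E2_eq by auto

lemma E1YE2:
  fixes Y :: "real mat"
  assumes Y: "Y \<in> carrier_mat (3*N) (3*N)" and r: "r < N" and c: "c < N"
  shows "(hstack N [1\<^sub>m N, 1\<^sub>m N, - 1\<^sub>m N] * Y * vstack N [1\<^sub>m N, 1\<^sub>m N, 1\<^sub>m N]) $$ (r,c) =
    (Y $$ (r,c) + Y $$ (r+N,c) - Y $$ (r+2*N,c)) + (Y $$ (r,c+N) + Y $$ (r+N,c+N) - Y $$ (r+2*N,c+N))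
    + (Y $$ (r,c+2*N) + Y $$ (r+N,c+2*N) - Y $$ (r+2*N,c+2*N))"
proof -
  let ?E1 = "hstack N [1\<^sub>m N, 1\<^sub>m N, - 1\<^sub>m N]" and ?E2 = "vstack N [1\<^sub>m N, 1\<^sub>m N, 1\<^sub>m N]"
  have E1: "?E1 \<in> carrier_mat N (3*N)" and E2: "?E2 \<in> carrier_mat (3*N) N" by (rule E1E2_carrier)+
  have E1Y: "?E1 * Y \<in> carrier_mat N (3*N)" using E1 Y by auto
  have a: "(?E1 * Y) $$ (r,l) = Y $$ (r,l) + Y $$ (r+N,l) - Y $$ (r+2*N,l)" if l: "l < 3*N" for l
  proof -
    have "(?E1 * Y) $$ (r,l) = (\<Sum>k=0..<3*N. ?E1 $$ (r,k) * Y $$ (k,l))"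
      by (rule mult_index_sum2[OF E1 Y r l])
    also have "\<dots> = (\<Sum>k=0..<3*N. (if k = r \<or> k = r + N then 1 else if k = r + 2*N then -1 else 0) * Y $$ (k,l))"
      by (intro sum.cong refl) (use r in \<open>simp add: E1_eq\<close>)
    also have "\<dots> = Y $$ (r,l) + Y $$ (r+N,l) - Y $$ (r+2*N,l)" by (rule sum_E1[OF r])
    finally show ?thesis .
  qed
  have "(?E1 * Y * ?E2) $$ (r,c) = (\<Sum>l=0..<3*N. (?E1 * Y) $$ (r,l) * ?E2 $$ (l,c))"
    by (rule mult_index_sum2[OF E1Y E2 r c])
  also have "\<dots> = (\<Sum>l=0..<3*N. (?E1 * Y) $$ (r,l) * (if l = c \<or> l = c + N \<or> l = c + 2*N then 1 else 0))"
  proof (intro sum.cong refl)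
    fix l assume "l \<in> {0..<3*N}"
    then have "?E2 $$ (l,c) = (if l = c \<or> l = c + N \<or> l = c + 2*N then 1 else 0)"
      using c by (simp add: E2_eq) presburger
    then show "(?E1 * Y) $$ (r,l) * ?E2 $$ (l,c) = (?E1 * Y) $$ (r,l) * (if l = c \<or> l = c + N \<or> l = c + 2*N then 1 else 0)"
      by (simp only:)
  qed
  also have "\<dots> = (?E1 * Y) $$ (r,c) + (?E1 * Y) $$ (r,c+N) + (?E1 * Y) $$ (r,c+2*N)"
    by (rule sum_E2[OF c])
  also have "\<dots> = (Y $$ (r,c) + Y $$ (r+N,c) - Y $$ (r+2*N,c)) + (Y $$ (r,c+N) + Y $$ (r+N,c+N) - Y $$ (r+2*N,c+N))
    + (Y $$ (r,c+2*N) + Y $$ (r+N,c+2*N) - Y $$ (r+2*N,c+2*N))"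
  proof -
    have a1: "(?E1 * Y) $$ (r,c) = Y $$ (r,c) + Y $$ (r+N,c) - Y $$ (r+2*N,c)" using c by (intro a) simp
    have a2: "(?E1 * Y) $$ (r,c+N) = Y $$ (r,c+N) + Y $$ (r+N,c+N) - Y $$ (r+2*N,c+N)" using c by (intro a) simp
    have a3: "(?E1 * Y) $$ (r,c+2*N) = Y $$ (r,c+2*N) + Y $$ (r+N,c+2*N) - Y $$ (r+2*N,c+2*N)" using c by (intro a) simp
    show ?thesis by (simp only: a1 a2 a3)
  qed
  finally show ?thesis .
qed

lemma bd_mult:
  fixes A1 A2 D1 D2 :: "real mat"
  assumes "A1 \<in> carrier_mat n1 n1" "A2 \<in> carrier_mat n1 n1" "D1 \<in> carrier_mat n2 n2" "D2 \<in> carrier_mat n2 n2"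
  shows "four_block_mat A1 (0\<^sub>m n1 n2) (0\<^sub>m n2 n1) D1 * four_block_mat A2 (0\<^sub>m n1 n2) (0\<^sub>m n2 n1) D2
     = four_block_mat (A1 * A2) (0\<^sub>m n1 n2) (0\<^sub>m n2 n1) (D1 * D2)"
  using assms by (subst mult_four_block_mat[OF assms(1) zero_carrier_mat zero_carrier_mat assms(3) assms(2) zero_carrier_mat zero_carrier_mat assms(4)]) auto

lemma ut_mult:
  fixes K Bc Y Z :: "real mat"
  assumes K: "K \<in> carrier_mat n n" and Bc: "Bc \<in> carrier_mat n p" and Y: "Y \<in> carrier_mat n n" and Z: "Z \<in> carrier_mat n p"
  shows "four_block_mat K Bc (0\<^sub>m p n) (0\<^sub>m p p) * four_block_mat Y Z (0\<^sub>m p n) (1\<^sub>m p)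
     = four_block_mat (K * Y) (K * Z + Bc) (0\<^sub>m p n) (0\<^sub>m p p)"
  using assms by (subst mult_four_block_mat[OF K Bc zero_carrier_mat zero_carrier_mat Y Z zero_carrier_mat one_carrier_mat]) auto

lemma block_lemma:
  fixes n p :: nat and a T t :: real and Ac W B1c Bb :: "real mat" and A Av B1 B2 X :: "real \<Rightarrow> real mat"
  assumes Ac: "Ac \<in> carrier_mat n n" and W: "W \<in> carrier_mat n n"
    and B1c: "B1c \<in> carrier_mat n p" and Bb: "Bb \<in> carrier_mat n p"
    and A: "mat_has_deriv_on n n A (\<lambda>t. Ac * A t) {0..T}" and A0: "A 0 = 1\<^sub>m n"
    and Av: "mat_has_deriv_on n n Av (\<lambda>t. W * Av t) {0..T}" and Av0: "Av 0 = 1\<^sub>m n"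
    and B1: "mat_has_deriv_on n p B1 (\<lambda>t. A t * B1c) {0..T}" and B10: "B1 0 = 0\<^sub>m n p"
    and B2: "mat_has_deriv_on n p B2 (\<lambda>t. Av t * Bb) {0..T}" and B20: "B2 0 = 0\<^sub>m n p"
    and X: "mat_has_deriv_on (3*(n+p)) (3*(n+p)) X (\<lambda>t. (diag_block_mat [four_block_mat Ac B1c (0\<^sub>m p n) (0\<^sub>m p p),
          four_block_mat W Bb (0\<^sub>m p n) (0\<^sub>m p p), four_block_mat W (0\<^sub>m n p) (0\<^sub>m p n) (0\<^sub>m p p)]
          - a \<cdot>\<^sub>m 1\<^sub>m (3*(n+p))) * X t) {0..T}"
    and X0: "X 0 = 1\<^sub>m (3*(n+p))"
    and t: "t \<in> {0..T}"
  shows "hstack (n+p) [1\<^sub>m (n+p), 1\<^sub>m (n+p), - 1\<^sub>m (n+p)] * X t * vstack (n+p) [1\<^sub>m (n+p), 1\<^sub>m (n+p), 1\<^sub>m (n+p)]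
     = exp (- a * t) \<cdot>\<^sub>m four_block_mat (A t) (B1 t + B2 t) (0\<^sub>m p n) (1\<^sub>m p)"
proof -
  define N where "N = n + p"
  have N3: "N + (N + N) = 3 * (n+p)" unfolding N_def by simp
  define H1 where "H1 = four_block_mat Ac B1c (0\<^sub>m p n) (0\<^sub>m p p)"
  define H2 where "H2 = four_block_mat W Bb (0\<^sub>m p n) (0\<^sub>m p p)"
  define H3 where "H3 = four_block_mat W (0\<^sub>m n p) (0\<^sub>m p n) (0\<^sub>m p p)"
  have H1c: "H1 \<in> carrier_mat N N" and H2c: "H2 \<in> carrier_mat N N" and H3c: "H3 \<in> carrier_mat N N"
    unfolding H1_def H2_def H3_def N_def using Ac W B1c Bb by auto
  define Hc where "Hc = four_block_mat H1 (0\<^sub>m N (N+N)) (0\<^sub>m (N+N) N) (four_block_mat H2 (0\<^sub>m N N) (0\<^sub>m N N) H3)"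
  have Hc_eq: "diag_block_mat [H1, H2, H3] = Hc" unfolding Hc_def by (rule diag3[OF H1c H2c H3c])
  have Hcc: "Hc \<in> carrier_mat (3*(n+p)) (3*(n+p))"
    unfolding Hc_def N3[symmetric] using H1c H2c H3c by auto
  define G1 where "G1 t = four_block_mat (A t) (B1 t) (0\<^sub>m p n) (1\<^sub>m p)" for t
  define G2 where "G2 t = four_block_mat (Av t) (B2 t) (0\<^sub>m p n) (1\<^sub>m p)" for t
  define G3 where "G3 t = four_block_mat (Av t) (0\<^sub>m n p) (0\<^sub>m p n) (1\<^sub>m p)" for t
  define G1' where "G1' t = four_block_mat (Ac * A t) (A t * B1c) (0\<^sub>m p n) (0\<^sub>m p p)" for t
  define G2' where "G2' t = four_block_mat (W * Av t) (Av t * Bb) (0\<^sub>m p n) (0\<^sub>m p p)" for t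
  define G3' where "G3' t = four_block_mat (W * Av t) (0\<^sub>m n p) (0\<^sub>m p n) (0\<^sub>m p p)" for t
  define G where "G t = four_block_mat (G1 t) (0\<^sub>m N (N+N)) (0\<^sub>m (N+N) N) (four_block_mat (G2 t) (0\<^sub>m N N) (0\<^sub>m N N) (G3 t))" for t
  define G' where "G' t = four_block_mat (G1' t) (0\<^sub>m N (N+N)) (0\<^sub>m (N+N) N) (four_block_mat (G2' t) (0\<^sub>m N N) (0\<^sub>m N N) (G3' t))" for t
  have dG1: "mat_has_deriv_on N N G1 G1' {0..T}"
    unfolding G1_def G1'_def N_def
    by (rule mhd_cong[OF mhd_four_block[OF A B1 mhd_const mhd_const]]) auto
  have dG2: "mat_has_deriv_on N N G2 G2' {0..T}"
    unfolding G2_def G2'_def N_def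
    by (rule mhd_cong[OF mhd_four_block[OF Av B2 mhd_const mhd_const]]) auto
  have dG3: "mat_has_deriv_on N N G3 G3' {0..T}"
    unfolding G3_def G3'_def N_def
    by (rule mhd_cong[OF mhd_four_block[OF Av mhd_const mhd_const mhd_const]]) auto
  have dG: "mat_has_deriv_on (3*(n+p)) (3*(n+p)) G G' {0..T}"
    unfolding G_def G'_def N3[symmetric]
    by (rule mhd_cong[OF mhd_four_block[OF dG1 mhd_const mhd_const mhd_four_block[OF dG2 mhd_const mhd_const dG3]]]) auto
  have Gc: "G s \<in> carrier_mat (3*(n+p)) (3*(n+p))" if "s \<in> {0..T}" for s
    using mhd_carrier[OF dG that] by auto
  have G'eq: "G' s = Hc * G s" if s: "s \<in> {0..T}" for s
  proof -
    have As: "A s \<in> carrier_mat n n" and Avs: "Av s \<in> carrier_mat n n"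
      and B1s: "B1 s \<in> carrier_mat n p" and B2s: "B2 s \<in> carrier_mat n p"
      using mhd_carrier[OF A s] mhd_carrier[OF Av s] mhd_carrier[OF B1 s] mhd_carrier[OF B2 s] by auto
    have i1: "A s * B1c = Ac * B1 s + B1c" by (rule aux_ident[OF Ac B1c A A0 B1 B10 s])
    have i2: "Av s * Bb = W * B2 s + Bb" by (rule aux_ident[OF W Bb Av Av0 B2 B20 s])
    have e1: "H1 * G1 s = G1' s" unfolding H1_def G1_def G1'_def
      by (subst ut_mult[OF Ac B1c As B1s]) (simp add: i1)
    have e2: "H2 * G2 s = G2' s" unfolding H2_def G2_def G2'_def
      by (subst ut_mult[OF W Bb Avs B2s]) (simp add: i2)
    have e3: "H3 * G3 s = G3' s" unfolding H3_def G3_def G3'_def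
      by (subst ut_mult[OF W zero_carrier_mat Avs zero_carrier_mat]) (use W in simp)
    have G1c: "G1 s \<in> carrier_mat N N" and G2c: "G2 s \<in> carrier_mat N N" and G3c: "G3 s \<in> carrier_mat N N"
      using mhd_carrier[OF dG1 s] mhd_carrier[OF dG2 s] mhd_carrier[OF dG3 s] by auto
    have "Hc * G s = four_block_mat (H1 * G1 s) (0\<^sub>m N (N+N)) (0\<^sub>m (N+N) N)
         (four_block_mat H2 (0\<^sub>m N N) (0\<^sub>m N N) H3 * four_block_mat (G2 s) (0\<^sub>m N N) (0\<^sub>m N N) (G3 s))"
      unfolding Hc_def G_def
      by (rule bd_mult) (use H1c H2c H3c G1c G2c G3c in auto)
    also have "four_block_mat H2 (0\<^sub>m N N) (0\<^sub>m N N) H3 * four_block_mat (G2 s) (0\<^sub>m N N) (0\<^sub>m N N) (G3 s)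
       = four_block_mat (H2 * G2 s) (0\<^sub>m N N) (0\<^sub>m N N) (H3 * G3 s)"
      by (rule bd_mult) (use H2c H3c G2c G3c in auto)
    finally show ?thesis unfolding G'_def e1 e2 e3 by simp
  qed
  define Phi where "Phi t = exp (- a * t) \<cdot>\<^sub>m G t" for t
  have dPhi0: "mat_has_deriv_on (3*(n+p)) (3*(n+p)) Phi (\<lambda>t. (- a * exp (- a * t)) \<cdot>\<^sub>m G t + exp (- a * t) \<cdot>\<^sub>m G' t) {0..T}"
    unfolding Phi_def
    by (rule mhd_smult_fun[OF _ dG]) (auto intro!: derivative_eq_intros)
  have dPhi: "mat_has_deriv_on (3*(n+p)) (3*(n+p)) Phi (\<lambda>t. (Hc - a \<cdot>\<^sub>m 1\<^sub>m (3*(n+p))) * Phi t) {0..T}"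
  proof (rule mhd_cong[OF dPhi0])
    fix s assume s: "s \<in> {0..T}"
    have Gs: "G s \<in> carrier_mat (3*(n+p)) (3*(n+p))" by (rule Gc[OF s])
    have "(Hc - a \<cdot>\<^sub>m 1\<^sub>m (3*(n+p))) * Phi s = Hc * Phi s - (a \<cdot>\<^sub>m 1\<^sub>m (3*(n+p))) * Phi s"
      unfolding Phi_def using Hcc Gs by (intro minus_mult_distrib_mat) auto
    also have "Hc * Phi s = exp (- a * s) \<cdot>\<^sub>m G' s"
      unfolding Phi_def G'eq[OF s] using Hcc Gs by (intro mult_smult_distrib) auto
    also have "(a \<cdot>\<^sub>m 1\<^sub>m (3*(n+p))) * Phi s = a \<cdot>\<^sub>m Phi s"
      unfolding Phi_def using Gs by (subst mult_smult_assoc_mat[of _ "3*(n+p)" "3*(n+p)" _ "3*(n+p)"]) auto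
    finally have eq: "(Hc - a \<cdot>\<^sub>m 1\<^sub>m (3*(n+p))) * Phi s = exp (- a * s) \<cdot>\<^sub>m G' s - a \<cdot>\<^sub>m Phi s" .
    have G's: "G' s \<in> carrier_mat (3*(n+p)) (3*(n+p))" using mhd_carrier[OF dG s] by auto
    have "(- a * exp (- a * s)) \<cdot>\<^sub>m G s + exp (- a * s) \<cdot>\<^sub>m G' s = exp (- a * s) \<cdot>\<^sub>m G' s - a \<cdot>\<^sub>m Phi s"
      unfolding Phi_def using Gs G's by (intro eq_matI) (auto simp: algebra_simps)
    then show "(- a * exp (- a * s)) \<cdot>\<^sub>m G s + exp (- a * s) \<cdot>\<^sub>m G' s = (Hc - a \<cdot>\<^sub>m 1\<^sub>m (3*(n+p))) * Phi s"
      using eq by simp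
  qed
  have Phi0: "Phi 0 = 1\<^sub>m (3*(n+p))"
  proof -
    have "G1 0 = 1\<^sub>m N" "G2 0 = 1\<^sub>m N" "G3 0 = 1\<^sub>m N"
      unfolding G1_def G2_def G3_def N_def A0 Av0 B10 B20 by simp_all
    then have "G 0 = 1\<^sub>m (3*(n+p))" unfolding G_def N3[symmetric] by simp
    then show ?thesis unfolding Phi_def by (intro eq_matI) auto
  qed
  have XPhi: "X t = Phi t"
    by (rule ode_unique[OF _ X[unfolded Hc_eq[unfolded H1_def H2_def H3_def]] dPhi _ t])
      (use Hcc X0 Phi0 in auto)
  have Gt: "G t \<in> carrier_mat (3*(n+p)) (3*(n+p))" by (rule Gc[OF t])
  note E = E1E2_carrier[of "n+p"]
  have "hstack (n+p) [1\<^sub>m (n+p), 1\<^sub>m (n+p), - 1\<^sub>m (n+p)] * X t * vstack (n+p) [1\<^sub>m (n+p), 1\<^sub>m (n+p), 1\<^sub>m (n+p)]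
     = exp (- a * t) \<cdot>\<^sub>m (hstack (n+p) [1\<^sub>m (n+p), 1\<^sub>m (n+p), - 1\<^sub>m (n+p)] * G t * vstack (n+p) [1\<^sub>m (n+p), 1\<^sub>m (n+p), 1\<^sub>m (n+p)])"
    unfolding XPhi Phi_def
    by (subst mult_smult_distrib[OF E(1) Gt], subst mult_smult_assoc_mat[OF _ E(2)]) (use E(1) Gt in auto)
  also have "hstack (n+p) [1\<^sub>m (n+p), 1\<^sub>m (n+p), - 1\<^sub>m (n+p)] * G t * vstack (n+p) [1\<^sub>m (n+p), 1\<^sub>m (n+p), 1\<^sub>m (n+p)]
     = four_block_mat (A t) (B1 t + B2 t) (0\<^sub>m p n) (1\<^sub>m p)"
  proof (rule eq_matI)
    fix r c assume r: "r < dim_row (four_block_mat (A t) (B1 t + B2 t) (0\<^sub>m p n) (1\<^sub>m p))"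
      and c: "c < dim_col (four_block_mat (A t) (B1 t + B2 t) (0\<^sub>m p n) (1\<^sub>m p))"
    have At: "A t \<in> carrier_mat n n" and Avt: "Av t \<in> carrier_mat n n"
      and B1t: "B1 t \<in> carrier_mat n p" and B2t: "B2 t \<in> carrier_mat n p"
      using mhd_carrier[OF A t] mhd_carrier[OF Av t] mhd_carrier[OF B1 t] mhd_carrier[OF B2 t] by auto
    from r c At have r: "r < n + p" and c: "c < n + p" by auto
    show "(hstack (n+p) [1\<^sub>m (n+p), 1\<^sub>m (n+p), - 1\<^sub>m (n+p)] * G t * vstack (n+p) [1\<^sub>m (n+p), 1\<^sub>m (n+p), 1\<^sub>m (n+p)]) $$ (r,c)
       = four_block_mat (A t) (B1 t + B2 t) (0\<^sub>m p n) (1\<^sub>m p) $$ (r,c)"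
      unfolding E1YE2[OF Gt r c]
      using r c At Avt B1t B2t by (simp add: G_def G1_def G2_def G3_def N_def)
  qed (use E mhd_carrier[OF A t] in auto)
  finally show ?thesis .
qed

lemma mat_integral_carrier: "mat_integral n m a b F \<in> carrier_mat n m"
  unfolding mat_integral_def by auto

lemma mat_integral_cong: "(\<And>t. t \<in> {a..b} \<Longrightarrow> F t = G t) \<Longrightarrow> mat_integral n m a b F = mat_integral n m a b G"
  unfolding mat_integral_def by (intro eq_matI) (auto intro!: integral_cong)

lemma mat_integral_mult_left:
  assumes C: "C \<in> carrier_mat k n"
    and F: "\<And>t. t \<in> {a..b} \<Longrightarrow> F t \<in> carrier_mat n m"
    and I: "\<And>r c. r < n \<Longrightarrow> c < m \<Longrightarrow> (\<lambda>t. F t $$ (r,c)) integrable_on {a..b}"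
  shows "C * mat_integral n m a b F = mat_integral k m a b (\<lambda>t. C * F t)"
proof (rule eq_matI)
  fix i c assume i: "i < dim_row (mat_integral k m a b (\<lambda>t. C * F t))" and c: "c < dim_col (mat_integral k m a b (\<lambda>t. C * F t))"
  then have i: "i < k" and c: "c < m" unfolding mat_integral_def by auto
  have "(C * mat_integral n m a b F) $$ (i,c) = (\<Sum>j=0..<n. C $$ (i,j) * integral {a..b} (\<lambda>t. F t $$ (j,c)))"
    using mult_index_sum2[OF C mat_integral_carrier i c] c unfolding mat_integral_def by simp
  also have "\<dots> = (\<Sum>j=0..<n. integral {a..b} (\<lambda>t. C $$ (i,j) * F t $$ (j,c)))"
    by simp
  also have "\<dots> = integral {a..b} (\<lambda>t. \<Sum>j=0..<n. C $$ (i,j) * F t $$ (j,c))"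
    by (rule integral_sum[symmetric]) (use I c in \<open>auto intro: integrable_on_mult_right\<close>)
  also have "\<dots> = integral {a..b} (\<lambda>t. (C * F t) $$ (i,c))"
    by (intro integral_cong) (use mult_index_sum2[OF C F i c] in auto)
  finally show "(C * mat_integral n m a b F) $$ (i,c) = mat_integral k m a b (\<lambda>t. C * F t) $$ (i,c)"
    using i c unfolding mat_integral_def by simp
qed (use C in \<open>auto simp: mat_integral_def\<close>)

lemma transpose_smult: "transpose_mat (c \<cdot>\<^sub>m M) = c \<cdot>\<^sub>m transpose_mat (M :: real mat)"
  by (intro eq_matI) auto

lemma smult_smult: "c \<cdot>\<^sub>m (d \<cdot>\<^sub>m M) = (c * d) \<cdot>\<^sub>m (M :: real mat)"
  by (intro eq_matI) auto

lemma mexp_mult_continuous: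
  assumes K: "K \<in> carrier_mat n n" and D: "D \<in> carrier_mat n m" and r: "r < n" and c: "c < m"
  shows "(\<lambda>t. (mexp (t \<cdot>\<^sub>m K) * D) $$ (r,c)) integrable_on {a..b}"
  by (rule integrable_continuous_interval, rule mhd_continuous[OF mhd_mult_right[OF D mexp_mhd[OF K]] r c])

lemma hstack2_carrier: "A \<in> carrier_mat r a \<Longrightarrow> B \<in> carrier_mat r b \<Longrightarrow> hstack r [A, B] \<in> carrier_mat r (a + b)"
  using hstack_carrier[of "[A,B]" id r dim_col] by (auto dest: carrier_matD)

lemma sum_list_ones: "sum_list (map (\<lambda>i. 1::nat) [0..<k]) = k"
  by (induction k) auto

lemma nx_alt: "(\<Sum>(i,j)\<leftarrow>sub_idx nz nu. (nij i j :: nat)) = sum_list (map (\<lambda>j. sum_list (map (\<lambda>i. nij i j) [0..<nz])) [0..<nu])"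
  by (induction nu) (auto simp: sub_idx_def o_def)

lemma foldr_zero_carrier: "foldr (+) xs (0\<^sub>m r c :: real mat) \<in> carrier_mat r c"
  using foldr_add_carrier[of xs "0\<^sub>m r c"] by simp

theorem proposition2:
  fixes nz nu :: nat
    and nij :: "nat \<Rightarrow> nat \<Rightarrow> nat"
    and Acij Bcij Ccij :: "nat \<Rightarrow> nat \<Rightarrow> real mat"
    and Dcij :: "nat \<Rightarrow> nat \<Rightarrow> real"
    and tau :: "nat \<Rightarrow> nat \<Rightarrow> real"
    and Ts mu :: real
    and Qc :: "real mat"
    and A Av B1 B2 Hq Hm Q M :: "real \<Rightarrow> real mat"
  assumes nz: "1 \<le> nz" and nu: "1 \<le> nu"
    and dims: "\<And>i j. i < nz \<Longrightarrow> j < nu \<Longrightarrow>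
         Acij i j \<in> carrier_mat (nij i j) (nij i j) \<and> Bcij i j \<in> carrier_mat (nij i j) 1 \<and>
         Ccij i j \<in> carrier_mat 1 (nij i j)"
    and tau_nonneg: "\<And>i j. i < nz \<Longrightarrow> j < nu \<Longrightarrow> 0 \<le> tau i j"
    and Ts: "0 < Ts"
    and Qc: "sym_psd nz Qc"
    and mu: "0 < mu"
  defines "nx \<equiv> (\<Sum>(i,j)\<leftarrow>sub_idx nz nu. nij i j)"
    and "nut \<equiv> (mbar nz nu Ts tau + 1) * nu"
    and "Ac \<equiv> Ac_mat nz nu Acij"
    and "V \<equiv> V_mat nz nu nij Ts tau"
    and "B1c \<equiv> B1c_mat nz nu Ts tau Bcij"
    and "B2c \<equiv> B2c_mat nz nu Ts tau Bcij"
    and "Cc \<equiv> Cc_mat nz nu Ccij"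
    and "Do \<equiv> Do_mat nz nu Ts tau Dcij"
  defines "nxu \<equiv> nx + nut"
  defines "Ixu \<equiv> (1\<^sub>m nxu :: real mat)"
    and "Ih \<equiv> (1\<^sub>m (3 * nxu) :: real mat)"
    and "B2cbar \<equiv> V * (B2c - B1c)"
  defines "H1c \<equiv> four_block_mat Ac B1c (0\<^sub>m nut nx) (0\<^sub>m nut nut)"
    and "H2c \<equiv> four_block_mat (V * Ac) B2cbar (0\<^sub>m nut nx) (0\<^sub>m nut nut)"
    and "H3c \<equiv> four_block_mat (V * Ac) (0\<^sub>m nx nut) (0\<^sub>m nut nx) (0\<^sub>m nut nut)"
  defines "Hc \<equiv> diag_block_mat [H1c, H2c, H3c]"
  defines "Hcq \<equiv> Hc - (mu / 2) \<cdot>\<^sub>m Ih"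
    and "Hcm \<equiv> Hc - mu \<cdot>\<^sub>m Ih"
    and "E1 \<equiv> hstack nxu [Ixu, Ixu, - Ixu]"
    and "E2 \<equiv> vstack nxu [Ixu, Ixu, Ixu]"
    and "Mcbar \<equiv> - (transpose_mat (hstack nz [Cc, Do]) * Qc)"
  defines "Qcbar \<equiv> - (Mcbar * hstack nz [Cc, Do])"
  assumes A_ode: "mat_has_deriv_on nx nx A (\<lambda>t. Ac * A t) {0..Ts}" and A0: "A 0 = 1\<^sub>m nx"
    and Av_ode: "mat_has_deriv_on nx nx Av (\<lambda>t. (V * Ac) * Av t) {0..Ts}" and Av0: "Av 0 = 1\<^sub>m nx"
    and B1_ode: "mat_has_deriv_on nx nut B1 (\<lambda>t. A t * B1c) {0..Ts}" and B10: "B1 0 = 0\<^sub>m nx nut"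
    and B2_ode: "mat_has_deriv_on nx nut B2 (\<lambda>t. Av t * B2cbar) {0..Ts}" and B20: "B2 0 = 0\<^sub>m nx nut"
    and Hq_ode: "mat_has_deriv_on (3 * nxu) (3 * nxu) Hq (\<lambda>t. Hcq * Hq t) {0..Ts}" and Hq0: "Hq 0 = Ih"
    and Hm_ode: "mat_has_deriv_on (3 * nxu) (3 * nxu) Hm (\<lambda>t. Hcm * Hm t) {0..Ts}" and Hm0: "Hm 0 = Ih"
    and Q_ode: "mat_has_deriv_on nxu nxu Q
                  (\<lambda>t. transpose_mat (E1 * Hq t * E2) * Qcbar * (E1 * Hq t * E2)) {0..Ts}"
    and Q0: "Q 0 = 0\<^sub>m nxu nxu"
    and M_ode: "mat_has_deriv_on nxu nz M (\<lambda>t. transpose_mat (E1 * Hm t * E2) * Mcbar) {0..Ts}"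
    and M0: "M 0 = 0\<^sub>m nxu nz"
  defines "Bo \<equiv> (\<lambda>s. mat_integral nx nut 0 s (\<lambda>r. mexp (r \<cdot>\<^sub>m Ac) * B1c)
                  + V * mat_integral nx nut 0 s (\<lambda>r. mexp (r \<cdot>\<^sub>m (V * Ac)) * (B2c - B1c)))"
  defines "Gam \<equiv> (\<lambda>s. four_block_mat (mexp (s \<cdot>\<^sub>m Ac)) (Bo s) (0\<^sub>m nut nx) (1\<^sub>m nut))"
  shows "A Ts = mexp (Ts \<cdot>\<^sub>m Ac) \<and>
         B1 Ts + B2 Ts = Bo Ts \<and>
         Q Ts = mat_integral nxu nxu 0 Ts
                  (\<lambda>s. exp (- mu * s) \<cdot>\<^sub>m (transpose_mat (Gam s) * Qcbar * Gam s)) \<and>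
         M Ts = mat_integral nxu nz 0 Ts
                  (\<lambda>s. exp (- mu * s) \<cdot>\<^sub>m (transpose_mat (Gam s) * Mcbar))"
proof -
  have nxu_eq: "nxu = nx + nut" by (simp add: nxu_def)
  have Acc: "Ac \<in> carrier_mat nx nx"
    unfolding Ac_def Ac_mat_def nx_def
    by (rule diag_block_carrier) (use dims in \<open>auto simp: set_sub_idx\<close>)
  have Vc: "V \<in> carrier_mat nx nx"
    unfolding V_def V_mat_def nx_def
    by (rule diag_block_carrier) (use dims in \<open>auto simp: set_sub_idx\<close>)
  have B1cc: "B1c \<in> carrier_mat nx nut"
    unfolding B1c_def B1c_mat_def nx_def nut_def Let_def
    by (rule vstack_carrier) (use dims in \<open>auto simp: set_sub_idx unit_row_def Esel_def intro!: mult_carrier_mat\<close>)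
  have B2cc: "B2c \<in> carrier_mat nx nut"
    unfolding B2c_def B2c_mat_def nx_def nut_def Let_def
    by (rule vstack_carrier) (use dims in \<open>auto simp: set_sub_idx unit_row_def Esel_def intro!: mult_carrier_mat\<close>)
  have Ccc: "Cc \<in> carrier_mat nz nx"
  proof -
    have "Cc \<in> carrier_mat nz (sum_list (map (\<lambda>j. sum_list (map (\<lambda>i. nij i j) [0..<nz])) [0..<nu]))"
      unfolding Cc_def Cc_mat_def
    proof (rule hstack_carrier)
      fix j assume "j \<in> set [0..<nu]"
      then have j: "j < nu" by auto
      have "diag_block_mat (map (\<lambda>i. Ccij i j) [0..<nz]) \<in> carrier_mat (sum_list (map (\<lambda>i. 1) [0..<nz])) (sum_list (map (\<lambda>i. nij i j) [0..<nz]))"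
        by (rule diag_block_carrier) (use dims j in auto)
      then show "diag_block_mat (map (\<lambda>i. Ccij i j) [0..<nz]) \<in> carrier_mat nz (sum_list (map (\<lambda>i. nij i j) [0..<nz]))"
        by (simp only: sum_list_ones)
    qed
    then show ?thesis unfolding nx_def nx_alt .
  qed
  have Doc: "Do \<in> carrier_mat nz nut"
  proof -
    have "Do \<in> carrier_mat (sum_list (map (\<lambda>i. 1) [0..<nz])) nut"
      unfolding Do_def Do_mat_def Let_def nut_def
      by (rule vstack_carrier) (auto intro: foldr_zero_carrier)
    then show ?thesis by (simp only: sum_list_ones)
  qed
  have CDc: "hstack nz [Cc, Do] \<in> carrier_mat nz nxu"
    unfolding nxu_eq by (rule hstack2_carrier[OF Ccc Doc])
  have Qcc: "Qc \<in> carrier_mat nz nz" using Qc unfolding sym_psd_def by auto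
  have Mcc: "Mcbar \<in> carrier_mat nxu nz" unfolding Mcbar_def using CDc Qcc by auto
  have Qbc: "Qcbar \<in> carrier_mat nxu nxu" unfolding Qcbar_def using CDc Mcc by auto
  have VAc: "V * Ac \<in> carrier_mat nx nx" using Vc Acc by auto
  have B2bc: "B2cbar \<in> carrier_mat nx nut" unfolding B2cbar_def using Vc B1cc B2cc by auto
  have Aexp: "A t = mexp (t \<cdot>\<^sub>m Ac)" if "t \<in> {0..Ts}" for t
    by (rule ode_mexp[OF Acc A_ode A0 that])
  have Avexp: "Av t = mexp (t \<cdot>\<^sub>m (V * Ac))" if "t \<in> {0..Ts}" for t
    by (rule ode_mexp[OF VAc Av_ode Av0 that])
  have comm: "V * Ac = Ac * V"
  proof -
    let ?xs = "sub_idx nz nu"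
    let ?d = "\<lambda>(i,j). nij i j"
    let ?v = "\<lambda>(i,j). delay_v Ts (tau i j) \<cdot>\<^sub>m 1\<^sub>m (nij i j)"
    let ?a = "\<lambda>(i,j). Acij i j"
    have cx: "?v x \<in> carrier_mat (?d x) (?d x) \<and> ?a x \<in> carrier_mat (?d x) (?d x)" if "x \<in> set ?xs" for x
      using that dims by (auto simp: set_sub_idx)
    have "V * Ac = diag_block_mat (map (\<lambda>x. ?v x * ?a x) ?xs)"
      unfolding V_def V_mat_def Ac_def Ac_mat_def by (rule diag_block_mult[where d="\<lambda>(i,j). nij i j"]) (use cx in auto)
    also have "map (\<lambda>x. ?v x * ?a x) ?xs = map (\<lambda>x. ?a x * ?v x) ?xs"
    proof (rule map_cong[OF refl])
      fix x assume x: "x \<in> set ?xs"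
      obtain i j where ij: "x = (i,j)" by (cases x)
      have a: "Acij i j \<in> carrier_mat (nij i j) (nij i j)" using cx[OF x] ij by auto
      show "?v x * ?a x = ?a x * ?v x" unfolding ij using a
        by (simp add: mult_smult_assoc_mat[OF one_carrier_mat a] mult_smult_distrib[OF a one_carrier_mat])
    qed
    also have "diag_block_mat (map (\<lambda>x. ?a x * ?v x) ?xs) = Ac * V"
      unfolding V_def V_mat_def Ac_def Ac_mat_def by (rule diag_block_mult[where d="\<lambda>(i,j). nij i j", symmetric]) (use cx in auto)
    finally show ?thesis .
  qed
  have VAv: "V * Av t = Av t * V" if t: "t \<in> {0..Ts}" for t
  proof -
    have d1: "mat_has_deriv_on nx nx (\<lambda>t. V * Av t) (\<lambda>t. (V * Ac) * (V * Av t)) {0..Ts}"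
    proof (rule mhd_cong[OF mhd_mult_left[OF Vc Av_ode]])
      fix s assume s: "s \<in> {0..Ts}"
      have Avs: "Av s \<in> carrier_mat nx nx" using mhd_carrier[OF Av_ode s] by auto
      have "V * (V * Ac * Av s) = (V * (V * Ac)) * Av s" using Vc VAc Avs by (simp add: assoc_mult_mat)
      also have "V * (V * Ac) = (V * Ac) * V"
      proof -
        have "V * (V * Ac) = V * (Ac * V)" by (simp only: comm)
        also have "\<dots> = (V * Ac) * V" using Vc Acc by (simp add: assoc_mult_mat)
        finally show ?thesis .
      qed
      also have "(V * Ac) * V * Av s = (V * Ac) * (V * Av s)" using Vc VAc Avs by (simp add: assoc_mult_mat)
      finally show "V * (V * Ac * Av s) = V * Ac * (V * Av s)" .
    qed
    have d2: "mat_has_deriv_on nx nx (\<lambda>t. Av t * V) (\<lambda>t. (V * Ac) * (Av t * V)) {0..Ts}"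
    proof (rule mhd_cong[OF mhd_mult_right[OF Vc Av_ode]])
      fix s assume s: "s \<in> {0..Ts}"
      have Avs: "Av s \<in> carrier_mat nx nx" using mhd_carrier[OF Av_ode s] by auto
      show "V * Ac * Av s * V = V * Ac * (Av s * V)" using Vc VAc Avs by (simp add: assoc_mult_mat)
    qed
    show ?thesis by (rule ode_unique[OF VAc d1 d2 _ t]) (use Vc in \<open>simp add: Av0\<close>)
  qed
  have Bo_eq: "Bo s = B1 s + B2 s" if s: "s \<in> {0..Ts}" for s
  proof -
    have sub: "{0..s} \<subseteq> {0..Ts}" using s by auto
    have s0: "0 \<le> s" using s by auto
    have "B1 s = B1 0 + mat_integral nx nut 0 s (\<lambda>r. A r * B1c)"
      by (rule mhd_ftc[OF mhd_subset[OF B1_ode sub] s0])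
    also have "\<dots> = mat_integral nx nut 0 s (\<lambda>r. mexp (r \<cdot>\<^sub>m Ac) * B1c)"
      unfolding B10 using sub by (auto simp: mat_integral_carrier Aexp intro!: mat_integral_cong)
    finally have b1: "B1 s = mat_integral nx nut 0 s (\<lambda>r. mexp (r \<cdot>\<^sub>m Ac) * B1c)" .
    have "B2 s = B2 0 + mat_integral nx nut 0 s (\<lambda>r. Av r * B2cbar)"
      by (rule mhd_ftc[OF mhd_subset[OF B2_ode sub] s0])
    also have "\<dots> = mat_integral nx nut 0 s (\<lambda>r. Av r * B2cbar)"
      unfolding B20 by (simp add: mat_integral_carrier)
    also have "\<dots> = mat_integral nx nut 0 s (\<lambda>r. V * (mexp (r \<cdot>\<^sub>m (V * Ac)) * (B2c - B1c)))"
    proof (rule mat_integral_cong)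
      fix r assume r: "r \<in> {0..s}"
      then have rT: "r \<in> {0..Ts}" using sub by auto
      have Avr: "Av r \<in> carrier_mat nx nx" using mhd_carrier[OF Av_ode rT] by auto
      have D: "B2c - B1c \<in> carrier_mat nx nut" using B2cc B1cc by auto
      have "V * (mexp (r \<cdot>\<^sub>m (V * Ac)) * (B2c - B1c)) = V * (Av r * (B2c - B1c))" unfolding Avexp[OF rT] ..
      also have "\<dots> = (V * Av r) * (B2c - B1c)" using Vc Avr D by (simp add: assoc_mult_mat)
      also have "\<dots> = (Av r * V) * (B2c - B1c)" unfolding VAv[OF rT] ..
      also have "\<dots> = Av r * B2cbar" unfolding B2cbar_def using Vc Avr D by (simp add: assoc_mult_mat)
      finally show "Av r * B2cbar = V * (mexp (r \<cdot>\<^sub>m (V * Ac)) * (B2c - B1c))" by simp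
    qed
    also have "\<dots> = V * mat_integral nx nut 0 s (\<lambda>r. mexp (r \<cdot>\<^sub>m (V * Ac)) * (B2c - B1c))"
      by (rule mat_integral_mult_left[symmetric, OF Vc])
        (use VAc B1cc B2cc in \<open>auto intro!: mexp_mult_continuous[where n=nx and m=nut] mult_carrier_mat[OF mexp_carrier]\<close>)
    finally have b2: "B2 s = V * mat_integral nx nut 0 s (\<lambda>r. mexp (r \<cdot>\<^sub>m (V * Ac)) * (B2c - B1c))" .
    show ?thesis unfolding Bo_def b1 b2 ..
  qed
  have Ts0: "Ts \<in> {0..Ts}" and Ts00: "0 \<le> Ts" using Ts by auto
  have Gamc: "Gam s \<in> carrier_mat nxu nxu" for s
    unfolding Gam_def nxu_eq using mexp_carrier[OF Acc] by (intro four_block_carrier_mat) auto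
  have GamT: "transpose_mat (Gam s) \<in> carrier_mat nxu nxu" for s using Gamc[of s] by auto
  have Gam_eq: "four_block_mat (A s) (B1 s + B2 s) (0\<^sub>m nut nx) (1\<^sub>m nut) = Gam s" if "s \<in> {0..Ts}" for s
    unfolding Gam_def Aexp[OF that] Bo_eq[OF that] ..
  have Hq0': "Hq 0 = 1\<^sub>m (3 * (nx + nut))" using Hq0 unfolding Ih_def nxu_eq .
  have Hm0': "Hm 0 = 1\<^sub>m (3 * (nx + nut))" using Hm0 unfolding Ih_def nxu_eq .
  note HqODE = Hq_ode[unfolded Hcq_def Hc_def H1c_def H2c_def H3c_def Ih_def nxu_eq]
  note HmODE = Hm_ode[unfolded Hcm_def Hc_def H1c_def H2c_def H3c_def Ih_def nxu_eq]
  have Gq: "E1 * Hq s * E2 = exp (- (mu/2) * s) \<cdot>\<^sub>m Gam s" if s: "s \<in> {0..Ts}" for s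
  proof -
    have "E1 * Hq s * E2 = exp (- (mu/2) * s) \<cdot>\<^sub>m four_block_mat (A s) (B1 s + B2 s) (0\<^sub>m nut nx) (1\<^sub>m nut)"
      unfolding E1_def E2_def Ixu_def nxu_eq
      by (rule block_lemma[OF Acc VAc B1cc B2bc A_ode A0 Av_ode Av0 B1_ode B10 B2_ode B20 HqODE Hq0' s])
    then show ?thesis unfolding Gam_eq[OF s] .
  qed
  have Gm: "E1 * Hm s * E2 = exp (- mu * s) \<cdot>\<^sub>m Gam s" if s: "s \<in> {0..Ts}" for s
  proof -
    have "E1 * Hm s * E2 = exp (- mu * s) \<cdot>\<^sub>m four_block_mat (A s) (B1 s + B2 s) (0\<^sub>m nut nx) (1\<^sub>m nut)"
      unfolding E1_def E2_def Ixu_def nxu_eq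
      by (rule block_lemma[OF Acc VAc B1cc B2bc A_ode A0 Av_ode Av0 B1_ode B10 B2_ode B20 HmODE Hm0' s])
    then show ?thesis unfolding Gam_eq[OF s] .
  qed
  have Qd: "mat_has_deriv_on nxu nxu Q (\<lambda>t. exp (- mu * t) \<cdot>\<^sub>m (transpose_mat (Gam t) * Qcbar * Gam t)) {0..Ts}"
  proof (rule mhd_cong[OF Q_ode])
    fix s assume s: "s \<in> {0..Ts}"
    define c where "c = exp (- (mu/2) * s)"
    have cc: "c * c = exp (- mu * s)" unfolding c_def exp_add[symmetric] by simp
    have "transpose_mat (E1 * Hq s * E2) * Qcbar * (E1 * Hq s * E2)
        = (c \<cdot>\<^sub>m transpose_mat (Gam s)) * Qcbar * (c \<cdot>\<^sub>m Gam s)"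
      unfolding Gq[OF s] transpose_smult c_def ..
    also have "\<dots> = c \<cdot>\<^sub>m (transpose_mat (Gam s) * Qcbar) * (c \<cdot>\<^sub>m Gam s)"
      by (subst mult_smult_assoc_mat[OF GamT Qbc]) (rule refl)
    also have "\<dots> = c \<cdot>\<^sub>m (transpose_mat (Gam s) * Qcbar * (c \<cdot>\<^sub>m Gam s))"
      using mult_carrier_mat[OF GamT[of s] Qbc] Gamc[of s] by (intro mult_smult_assoc_mat[where nr=nxu and n=nxu and nc=nxu]) auto
    also have "transpose_mat (Gam s) * Qcbar * (c \<cdot>\<^sub>m Gam s) = c \<cdot>\<^sub>m (transpose_mat (Gam s) * Qcbar * Gam s)"
      using GamT Qbc Gamc by (intro mult_smult_distrib) auto
    also have "c \<cdot>\<^sub>m (c \<cdot>\<^sub>m (transpose_mat (Gam s) * Qcbar * Gam s)) = exp (- mu * s) \<cdot>\<^sub>m (transpose_mat (Gam s) * Qcbar * Gam s)"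
      unfolding smult_smult cc ..
    finally show "transpose_mat (E1 * Hq s * E2) * Qcbar * (E1 * Hq s * E2) = exp (- mu * s) \<cdot>\<^sub>m (transpose_mat (Gam s) * Qcbar * Gam s)" .
  qed
  have Md: "mat_has_deriv_on nxu nz M (\<lambda>t. exp (- mu * t) \<cdot>\<^sub>m (transpose_mat (Gam t) * Mcbar)) {0..Ts}"
  proof (rule mhd_cong[OF M_ode])
    fix s assume s: "s \<in> {0..Ts}"
    show "transpose_mat (E1 * Hm s * E2) * Mcbar = exp (- mu * s) \<cdot>\<^sub>m (transpose_mat (Gam s) * Mcbar)"
      unfolding Gm[OF s] transpose_smult by (rule mult_smult_assoc_mat[OF GamT Mcc])
  qed
  have QT: "Q Ts = mat_integral nxu nxu 0 Ts (\<lambda>s. exp (- mu * s) \<cdot>\<^sub>m (transpose_mat (Gam s) * Qcbar * Gam s))"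
    unfolding mhd_ftc[OF Qd Ts00] Q0 by (rule left_add_zero_mat[OF mat_integral_carrier])
  have MT: "M Ts = mat_integral nxu nz 0 Ts (\<lambda>s. exp (- mu * s) \<cdot>\<^sub>m (transpose_mat (Gam s) * Mcbar))"
    unfolding mhd_ftc[OF Md Ts00] M0 by (rule left_add_zero_mat[OF mat_integral_carrier])
  show ?thesis using Aexp[OF Ts0] Bo_eq[OF Ts0] QT MT by simp
qed

end
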